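(* Let $\mathbb{F}$ be a field of characteristic zero and $n\le m$ natural numbers. Then $W_{n,m}=\mathrm{span}_{\mathbb{F}}\{P_O: O\in\Omega_{n,m}\}$.
   Context: $\mathbb{F}\langle X\rangle$ is the free non-unitary associative algebra on $X=\{x_1,x_2,\dots\}$; $(x^n)^T$ is the smallest ideal containing $x^n$ invariant under all algebra endomorphisms; $V_m$ is the space of multilinear polynomials of degree $m$ in $x_1,\dots,x_m$; $W_{n,m}:=V_m\cap(x^n)^T$. An ordered partition of $[m]=\{1,\dots,m\}$ into $n$ parts is a set $O=\{A_1,\dots,A_n\}$ of nonempty ordered lists $A_i$ of elements of $[m]$ whose underlying sets are pairwise disjoint with union $[m]$; $\Omega_{n,m}$ is the set of these. For a list $A=[\![ab\cdots c]\!]$, $x_A:=x_ax_b\cdots x_c$, and $P_O:=\sum_{\sigma\in S_n}x_{A_{\sigma(1)}}\cdots x_{A_{\sigma(n)}}$. *)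

theory Defs
  imports Main
begin

text \<open>Elements of the free non-unitary associative algebra F<X>, X = {x_1, x_2, ...},
  are represented by their coefficient functions on words: a word is a list of
  positive variable indices; the empty word and words containing index 0 get
  coefficient 0; the support is finite.\<close>

type_synonym 'a ncpoly = "nat list \<Rightarrow> 'a"

definition ncpolys :: "('a::field) ncpoly set" where
  "ncpolys = {p. finite {w. p w \<noteq> 0} \<and> (\<forall>w. p w \<noteq> 0 \<longrightarrow> w \<noteq> [] \<and> 0 \<notin> set w)}"

definition nczero :: "('a::field) ncpoly" where "nczero = (\<lambda>w. 0)"
definition ncadd :: "('a::field) ncpoly \<Rightarrow> 'a ncpoly \<Rightarrow> 'a ncpoly" where
  "ncadd p q = (\<lambda>w. p w + q w)"
definition ncscale :: "'a::field \<Rightarrow> 'a ncpoly \<Rightarrow> 'a ncpoly" where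
  "ncscale c p = (\<lambda>w. c * p w)"
definition ncmult :: "('a::field) ncpoly \<Rightarrow> 'a ncpoly \<Rightarrow> 'a ncpoly" where
  "ncmult p q = (\<lambda>w. \<Sum>k\<le>length w. p (take k w) * q (drop k w))"

definition ncmon :: "nat list \<Rightarrow> ('a::field) ncpoly" where
  "ncmon u = (\<lambda>w. if w = u then 1 else 0)"
definition ncvar :: "nat \<Rightarrow> ('a::field) ncpoly" where
  "ncvar i = ncmon [i]"

fun ncpow :: "('a::field) ncpoly \<Rightarrow> nat \<Rightarrow> 'a ncpoly" where
  "ncpow p 0 = nczero"  \<comment> \<open>unused: no unit in a non-unitary algebra\<close>
| "ncpow p (Suc 0) = p"
| "ncpow p (Suc (Suc k)) = ncmult p (ncpow p (Suc k))"

definition ncspan :: "('a::field) ncpoly set \<Rightarrow> 'a ncpoly set" where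
  "ncspan G = {p. \<exists>S c. finite S \<and> S \<subseteq> G \<and> p = (\<lambda>w. \<Sum>g\<in>S. c g * g w)}"

definition is_ncideal :: "('a::field) ncpoly set \<Rightarrow> bool" where
  "is_ncideal I \<longleftrightarrow> I \<subseteq> ncpolys \<and> nczero \<in> I \<and>
     (\<forall>p\<in>I. \<forall>q\<in>I. ncadd p q \<in> I) \<and> (\<forall>c. \<forall>p\<in>I. ncscale c p \<in> I) \<and>
     (\<forall>p\<in>I. \<forall>a\<in>ncpolys. ncmult a p \<in> I \<and> ncmult p a \<in> I)"

definition is_ncendo :: "(('a::field) ncpoly \<Rightarrow> 'a ncpoly) \<Rightarrow> bool" where
  "is_ncendo \<phi> \<longleftrightarrow> \<phi> ` ncpolys \<subseteq> ncpolys \<and>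
     (\<forall>p\<in>ncpolys. \<forall>q\<in>ncpolys. \<phi> (ncadd p q) = ncadd (\<phi> p) (\<phi> q)) \<and>
     (\<forall>c. \<forall>p\<in>ncpolys. \<phi> (ncscale c p) = ncscale c (\<phi> p)) \<and>
     (\<forall>p\<in>ncpolys. \<forall>q\<in>ncpolys. \<phi> (ncmult p q) = ncmult (\<phi> p) (\<phi> q))"

definition Tideal_pow :: "nat \<Rightarrow> ('a::field) ncpoly set" where
  "Tideal_pow n = \<Inter>{I. is_ncideal I \<and> ncpow (ncvar 1) n \<in> I \<and>
                        (\<forall>\<phi>. is_ncendo \<phi> \<longrightarrow> \<phi> ` I \<subseteq> I)}"

definition Vmult :: "nat \<Rightarrow> ('a::field) ncpoly set" where
  "Vmult m = {p \<in> ncpolys. \<forall>w. p w \<noteq> 0 \<longrightarrow> distinct w \<and> set w = {1..m}}"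

definition Wnm :: "nat \<Rightarrow> nat \<Rightarrow> ('a::field) ncpoly set" where
  "Wnm n m = Vmult m \<inter> Tideal_pow n"

definition Omega :: "nat \<Rightarrow> nat \<Rightarrow> nat list set set" where
  "Omega n m = {Op. finite Op \<and> card Op = n \<and> (\<forall>A\<in>Op. A \<noteq> [] \<and> distinct A) \<and>
      (\<forall>A\<in>Op. \<forall>B\<in>Op. A \<noteq> B \<longrightarrow> set A \<inter> set B = {}) \<and> (\<Union>A\<in>Op. set A) = {1..m}}"

definition P_O :: "nat list set \<Rightarrow> ('a::field) ncpoly" where
  "P_O Op = (\<lambda>w. \<Sum>L\<in>{L. distinct L \<and> set L = Op}. ncmon (concat L) w)"

end

theory Submission
  imports Defs "HOL-Library.Poly_Mapping"
begin


instantiation list :: (type) monoid_add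
begin
definition zero_list_def: "0 = []"
definition plus_list_def: "xs + ys = xs @ ys"
instance by standard (auto simp: zero_list_def plus_list_def)
end

abbreviation (input) lkp where "lkp \<equiv> Poly_Mapping.lookup"
abbreviation (input) sng where "sng \<equiv> Poly_Mapping.single"
abbreviation (input) kys where "kys \<equiv> Poly_Mapping.keys"

type_synonym 'a R = "nat list \<Rightarrow>\<^sub>0 'a"

lemma sum_any_prefix:
  "(\<Sum>q. (g q when w = l @ q)) = (g (drop (length l) w) when take (length l) w = l)"
proof (cases "take (length l) w = l")
  case True
  then have "w = l @ q \<longleftrightarrow> q = drop (length l) w" for q
    by (metis append_eq_conv_conj)
  then show ?thesis using True by (simp add: when_def)
next
  case False
  then have "w \<noteq> l @ q" for q by auto
  then show ?thesis using False by simp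
qed

lemma lookup_mult_list:
  fixes P Q :: "('a::field) R"
  shows "lkp (P * Q) w = (\<Sum>k\<le>length w. lkp P (take k w) * lkp Q (drop k w))"
proof -
  have "lkp (P * Q) w = (\<Sum>l. lkp P l * (lkp Q (drop (length l) w) when take (length l) w = l))"
    by (simp add: lookup_mult plus_list_def sum_any_prefix)
  also have "\<dots> = (\<Sum>l\<in>(\<lambda>k. take k w) ` {..length w}. lkp P l * (lkp Q (drop (length l) w) when take (length l) w = l))"
    by (rule Sum_any.expand_superset) (auto simp: when_def, metis atMost_iff image_eqI length_take min_def nat_le_linear)
  also have "\<dots> = (\<Sum>k\<le>length w. lkp P (take k w) * lkp Q (drop k w))"
  proof -
    have inj: "inj_on (\<lambda>k. take k w) {..length w}"
      by (auto simp: inj_on_def) (metis length_take min.absorb2)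
    show ?thesis by (subst sum.reindex[OF inj]) (auto intro!: sum.cong simp: min_def)
  qed
  finally show ?thesis .
qed

lemma lookup_sng_mult:
  fixes X :: "('a::field) R"
  shows "lkp (sng u a * X) w = (if take (length u) w = u then a * lkp X (drop (length u) w) else 0)"
proof -
  have "lkp (sng u a * X) w = (\<Sum>k\<le>length w. if k = length u then (if take (length u) w = u then a * lkp X (drop (length u) w) else 0) else 0)"
    unfolding lookup_mult_list
    by (rule sum.cong) (auto simp: lookup_single when_def)
  also have "\<dots> = (if take (length u) w = u then a * lkp X (drop (length u) w) else 0)"
    by (auto simp: sum.delta')
  finally show ?thesis .
qed

lemma lookup_mult_sng:
  fixes X :: "('a::field) R"
  shows "lkp (X * sng u a) w = (if length u \<le> length w \<and> drop (length w - length u) w = u then lkp X (take (length w - length u) w) * a else 0)"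
proof -
  have "lkp (X * sng u a) w = (\<Sum>k\<le>length w. if k = length w - length u then (if length u \<le> length w \<and> drop (length w - length u) w = u then lkp X (take (length w - length u) w) * a else 0) else 0)"
    unfolding lookup_mult_list
    by (rule sum.cong) (auto simp: lookup_single when_def)
  also have "\<dots> = (if length u \<le> length w \<and> drop (length w - length u) w = u then lkp X (take (length w - length u) w) * a else 0)"
    by (auto simp: sum.delta')
  finally show ?thesis .
qed

definition sc :: "'a::field \<Rightarrow> 'a R \<Rightarrow> 'a R" where
  "sc c P = sng [] c * P"

lemma lookup_sc [simp]: "lkp (sc c P) w = c * lkp P w"
  by (simp add: sc_def lookup_sng_mult)

lemma central: "sng [] (c::'a::field) * (X::'a R) = X * sng [] c"
proof (rule poly_mapping_eqI)
  fix w
  show "lkp (sng [] c * X) w = lkp (X * sng [] c) w"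
    using lookup_sng_mult[of "[]" c X w] lookup_mult_sng[of X "[]" c w] by (simp add: mult.commute)
qed

lemma sc_mult_left: "sc c X * Y = sc c (X * Y)"
  by (simp add: sc_def mult.assoc)

lemma sc_mult_right: "X * sc c Y = sc c (X * Y)"
proof -
  have "X * sc c Y = (X * sng [] c) * Y" by (simp add: sc_def mult.assoc)
  also have "\<dots> = sng [] c * X * Y" by (simp add: central)
  finally show ?thesis by (simp add: sc_def mult.assoc)
qed

lemma sc_sc [simp]: "sc c (sc d X) = sc (c * d) X"
  by (rule poly_mapping_eqI) simp

lemma sc_add: "sc c (X + Y) = sc c X + sc c Y"
  by (rule poly_mapping_eqI) (simp add: lookup_add algebra_simps)

lemma sc_add2: "sc (c + d) X = sc c X + sc d X"
  by (rule poly_mapping_eqI) (simp add: lookup_add algebra_simps)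

lemma sc_diff: "sc c (X - Y) = sc c X - sc c Y"
  by (rule poly_mapping_eqI) (simp add: lookup_minus algebra_simps)

lemma sc_0 [simp]: "sc 0 X = 0" "sc c 0 = 0"
  by (rule poly_mapping_eqI, simp)+

lemma sc_1 [simp]: "sc 1 X = X"
  by (rule poly_mapping_eqI) simp

lemma sc_sum: "sc c (sum f S) = (\<Sum>i\<in>S. sc c (f i))"
  by (rule poly_mapping_eqI) (simp add: lookup_sum sum_distrib_left)

lemma sc_sng: "sc c (sng u 1) = sng u c"
  by (rule poly_mapping_eqI) (simp add: lookup_single when_def)

lemma poly_expand: "(P::'a::field R) = (\<Sum>v\<in>kys P. sc (lkp P v) (sng v 1))"
proof (rule poly_mapping_eqI)
  fix k
  have "(\<Sum>x\<in>kys P. lkp P x * (if x = k then 1 else 0)) = (\<Sum>x\<in>kys P. if x = k then lkp P x else 0)"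
    by (rule sum.cong) auto
  also have "\<dots> = lkp P k" by (simp add: in_keys_iff)
  finally show "lkp P k = lkp (\<Sum>v\<in>kys P. sc (lkp P v) (sng v 1)) k"
    by (simp add: lookup_sum lookup_single when_def)
qed

lemma mult_sng_sng: "sng (u::nat list) (a::'a::field) * sng v b = sng (u @ v) (a * b)"
  by (simp add: mult_single plus_list_def)

lemma of_nat_sc: "(of_nat k :: 'a::field R) * X = sc (of_nat k) X"
  by (simp add: sc_def of_nat_single zero_list_def)

definition gs :: "'a::field R \<Rightarrow> bool" where
  "gs P \<longleftrightarrow> (\<forall>w\<in>kys P. w \<noteq> [] \<and> 0 \<notin> set w)"

lemma lkp_ncpolys: "lkp P \<in> ncpolys \<longleftrightarrow> gs P"
  by (auto simp: ncpolys_def gs_def in_keys_iff)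

lemma ncpolys_Abs:
  assumes "p \<in> ncpolys"
  shows "lkp (Abs_poly_mapping p) = p" "gs (Abs_poly_mapping p)"
proof -
  show 1: "lkp (Abs_poly_mapping p) = p"
    using assms by (simp add: ncpolys_def)
  show "gs (Abs_poly_mapping p)"
    using assms lkp_ncpolys[of "Abs_poly_mapping p"] by (simp add: 1)
qed

lemma ncpolys_ex: "p \<in> ncpolys \<Longrightarrow> \<exists>P. p = lkp P \<and> gs P"
  using ncpolys_Abs by metis

lemma ncadd_lkp: "ncadd (lkp P) (lkp Q) = lkp (P + Q)"
  by (simp add: ncadd_def fun_eq_iff lookup_add)

lemma ncscale_lkp: "ncscale c (lkp P) = lkp (sc c P)"
  by (simp add: ncscale_def fun_eq_iff)

lemma ncmult_lkp: "ncmult (lkp P) (lkp Q) = lkp (P * Q)"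
  by (simp add: ncmult_def fun_eq_iff lookup_mult_list)

lemma nczero_lkp: "nczero = lkp 0"
  by (simp add: nczero_def fun_eq_iff)

lemma ncpow_lkp: "ncpow (lkp P) (Suc k) = lkp (P ^ Suc k)"
  by (induction k) (simp_all add: ncmult_lkp)

lemma ncmon_lkp: "ncmon u = lkp (sng u 1)"
  by (simp add: ncmon_def fun_eq_iff lookup_single when_def)

lemma lkp_inj: "lkp P = lkp Q \<Longrightarrow> P = Q"
  using poly_mapping_eq_iff by blast

lemma gs_0 [simp]: "gs 0"
  by (simp add: gs_def)

lemma gs_add: "gs P \<Longrightarrow> gs Q \<Longrightarrow> gs (P + Q)"
  unfolding gs_def using keys_add[of P Q] by blast

lemma gs_sc: "gs P \<Longrightarrow> gs (sc c P)"
  unfolding gs_def by (auto simp: in_keys_iff)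

lemma gs_uminus: "gs P \<Longrightarrow> gs (- P)"
  unfolding gs_def by (auto simp: in_keys_iff)

lemma gs_diff: "gs P \<Longrightarrow> gs Q \<Longrightarrow> gs (P - Q)"
  using gs_add[of P "-Q"] gs_uminus[of Q] by simp

lemma gs_mult: "gs P \<Longrightarrow> gs Q \<Longrightarrow> gs (P * Q)"
  unfolding gs_def using keys_mult[of P Q] by (fastforce simp: plus_list_def)

lemma gs_pow: "gs P \<Longrightarrow> gs (P ^ Suc k)"
  by (induction k) (auto intro: gs_mult)

lemma gs_sum: "(\<And>i. i \<in> S \<Longrightarrow> gs (f i)) \<Longrightarrow> gs (sum f S)"
  by (induction S rule: infinite_finite_induct) (auto intro: gs_add)

lemma gs_sng: "u \<noteq> [] \<Longrightarrow> 0 \<notin> set u \<Longrightarrow> gs (sng u c)"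
  by (simp add: gs_def)

section \<open>Projection onto multilinear words\<close>

definition pr :: "nat set \<Rightarrow> 'a::field R \<Rightarrow> 'a R" where
  "pr D P = Abs_poly_mapping (\<lambda>v. if distinct v \<and> set v = D then lkp P v else 0)"

lemma lookup_pr: "lkp (pr D P) v = (if distinct v \<and> set v = D then lkp P v else 0)"
proof -
  have "finite {v. (if distinct v \<and> set v = D then lkp P v else 0) \<noteq> 0}"
    by (rule finite_subset[of _ "kys P"]) (auto simp: in_keys_iff)
  then show ?thesis unfolding pr_def by simp
qed

lemma pr_add: "pr D (P + Q) = pr D P + pr D Q"
  by (rule poly_mapping_eqI) (simp add: lookup_pr lookup_add)

lemma pr_diff: "pr D (P - Q) = pr D P - pr D Q"
  by (rule poly_mapping_eqI) (simp add: lookup_pr lookup_minus)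

lemma pr_sc: "pr D (sc c P) = sc c (pr D P)"
  by (rule poly_mapping_eqI) (simp add: lookup_pr)

lemma pr_0 [simp]: "pr D 0 = 0"
  by (rule poly_mapping_eqI) (simp add: lookup_pr)

lemma pr_sum: "pr D (sum f S) = (\<Sum>i\<in>S. pr D (f i))"
  by (induction S rule: infinite_finite_induct) (simp_all add: pr_add)

lemma pr_of_nat: "pr D (of_nat k * P) = of_nat k * pr D P"
  by (simp add: of_nat_sc pr_sc)

definition dw :: "nat set \<Rightarrow> nat list set" where
  "dw D = {u. distinct u \<and> set u \<subseteq> D}"

lemma finite_dw: "finite D \<Longrightarrow> finite (dw D)"
proof -
  assume "finite D"
  have "dw D \<subseteq> {xs. set xs \<subseteq> D \<and> length xs \<le> card D}"
  proof
    fix u assume "u \<in> dw D"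
    then have "distinct u" "set u \<subseteq> D" by (auto simp: dw_def)
    then show "u \<in> {xs. set xs \<subseteq> D \<and> length xs \<le> card D}"
      using card_mono[OF \<open>finite D\<close>, of "set u"] distinct_card[of u] by simp
  qed
  then show ?thesis using finite_lists_length_le[OF \<open>finite D\<close>] finite_subset by blast
qed

lemma sum_prefixes:
  assumes "finite S"
  shows "(\<Sum>u\<in>S. if take (length u) w = u then f u else 0) =
         (\<Sum>k\<le>length w. if take k w \<in> S then f (take k w) else 0)"
proof -
  let ?T = "(\<lambda>k. take k w) ` {..length w}"
  have inj: "inj_on (\<lambda>k. take k w) {..length w}"
    by (auto simp: inj_on_def) (metis length_take min.absorb2)
  have "(\<Sum>u\<in>S. if take (length u) w = u then f u else 0) = (\<Sum>u\<in>S. if u \<in> ?T then f u else 0)"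
  proof (rule sum.cong)
    fix u assume "u \<in> S"
    have "take (length u) w = u \<longleftrightarrow> u \<in> ?T"
    proof
      assume h: "take (length u) w = u"
      then have "length u \<le> length w" by (metis length_take min.cobounded1)
      then show "u \<in> ?T" using h by (intro image_eqI[where x="length u"]) auto
    next
      assume "u \<in> ?T" then obtain k where "k \<le> length w" "u = take k w" by auto
      then show "take (length u) w = u" by (simp add: min.absorb2)
    qed
    then show "(if take (length u) w = u then f u else 0) = (if u \<in> ?T then f u else 0)" by simp
  qed simp
  also have "\<dots> = (\<Sum>u\<in>S \<inter> ?T. f u)"
    using assms by (simp add: sum.inter_restrict)
  also have "\<dots> = (\<Sum>u\<in>?T. if u \<in> S then f u else 0)"
    by (simp add: sum.inter_restrict[symmetric] Int_commute)
  also have "\<dots> = (\<Sum>k\<le>length w. if take k w \<in> S then f (take k w) else 0)"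
    by (simp add: sum.reindex[OF inj])
  finally show ?thesis .
qed

lemma sum_suffixes:
  assumes "finite S"
  shows "(\<Sum>u\<in>S. if length u \<le> length w \<and> drop (length w - length u) w = u then f u else 0) =
         (\<Sum>k\<le>length w. if drop k w \<in> S then f (drop k w) else 0)"
proof -
  let ?T = "(\<lambda>k. drop k w) ` {..length w}"
  have inj: "inj_on (\<lambda>k. drop k w) {..length w}"
    by (auto simp: inj_on_def) (metis diff_diff_cancel length_drop)
  have "(\<Sum>u\<in>S. if length u \<le> length w \<and> drop (length w - length u) w = u then f u else 0) = (\<Sum>u\<in>S. if u \<in> ?T then f u else 0)"
  proof (rule sum.cong)
    fix u assume "u \<in> S"
    have "length u \<le> length w \<and> drop (length w - length u) w = u \<longleftrightarrow> u \<in> ?T"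
    proof
      assume h: "length u \<le> length w \<and> drop (length w - length u) w = u"
      show "u \<in> ?T" using h by (intro image_eqI[where x="length w - length u"]) auto
    next
      assume "u \<in> ?T" then show "length u \<le> length w \<and> drop (length w - length u) w = u" by auto
    qed
    then show "(if length u \<le> length w \<and> drop (length w - length u) w = u then f u else 0) = (if u \<in> ?T then f u else 0)" by simp
  qed simp
  also have "\<dots> = (\<Sum>u\<in>S \<inter> ?T. f u)"
    using assms by (simp add: sum.inter_restrict)
  also have "\<dots> = (\<Sum>u\<in>?T. if u \<in> S then f u else 0)"
    by (simp add: sum.inter_restrict[symmetric] Int_commute)
  also have "\<dots> = (\<Sum>k\<le>length w. if drop k w \<in> S then f (drop k w) else 0)"
    by (simp add: sum.reindex[OF inj])
  finally show ?thesis .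
qed

lemma distinct_take_drop_disj: "distinct w \<Longrightarrow> set (take k w) \<inter> set (drop k w) = {}"
  by (metis append_take_drop_id distinct_append)

lemma set_take_drop:
  assumes "distinct w"
  shows "set (drop k w) = set w - set (take k w)" "set (take k w) = set w - set (drop k w)"
proof -
  have u: "set w = set (take k w) \<union> set (drop k w)" by (metis append_take_drop_id set_append)
  show "set (drop k w) = set w - set (take k w)" "set (take k w) = set w - set (drop k w)"
    using u distinct_take_drop_disj[OF assms, of k] by auto
qed

lemma pr_mult_left:
  fixes A B :: "'a::field R"
  assumes "finite D"
  shows "pr D (A * B) = (\<Sum>u\<in>dw D. sc (lkp A u) (sng u 1 * pr (D - set u) B))"
proof (rule poly_mapping_eqI)
  fix w
  let ?f = "\<lambda>u. lkp A u * (if distinct (drop (length u) w) \<and> set (drop (length u) w) = D - set u then lkp B (drop (length u) w) else 0)"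
  have "lkp (\<Sum>u\<in>dw D. sc (lkp A u) (sng u 1 * pr (D - set u) B)) w =
        (\<Sum>u\<in>dw D. if take (length u) w = u then ?f u else 0)"
    by (auto simp: lookup_sum lookup_sng_mult lookup_pr intro!: sum.cong)
  also have "\<dots> = (\<Sum>k\<le>length w. if take k w \<in> dw D then ?f (take k w) else 0)"
    by (rule sum_prefixes[OF finite_dw[OF assms]])
  also have "\<dots> = lkp (pr D (A * B)) w"
  proof (cases "distinct w \<and> set w = D")
    case True
    have "(if take k w \<in> dw D then ?f (take k w) else 0) = lkp A (take k w) * lkp B (drop k w)"
      if "k \<le> length w" for k
    proof -
      have "take k w \<in> dw D" using True by (auto simp: dw_def dest: in_set_takeD)
      moreover have "distinct (drop k w)" using True by simp
      moreover have "set (drop k w) = D - set (take k w)"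
        using True set_take_drop[of w k] by simp
      ultimately show ?thesis using that by (simp add: min.absorb2)
    qed
    then show ?thesis using True by (simp add: lookup_pr lookup_mult_list)
  next
    case False
    have z: "(if take k w \<in> dw D then ?f (take k w) else 0) = 0" if "k \<le> length w" for k
    proof (rule ccontr)
      assume nz: "(if take k w \<in> dw D then ?f (take k w) else 0) \<noteq> 0"
      have lk: "min (length w) k = k" using that by simp
      from nz have h: "take k w \<in> dw D" "distinct (drop k w)" "set (drop k w) = D - set (take k w)"
        by (simp_all add: lk split: if_splits)
      have "distinct (take k w) \<and> distinct (drop k w) \<and> set (take k w) \<inter> set (drop k w) = {}" using h by (auto simp: dw_def)
      then have "distinct w" by (metis append_take_drop_id distinct_append)
      moreover have "set (take k w) \<union> set (drop k w) = D" using h by (auto simp: dw_def)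
      then have "set w = D" by (metis append_take_drop_id set_append)
      ultimately show False using False by simp
    qed
    have s0: "(\<Sum>k\<le>length w. if take k w \<in> dw D then ?f (take k w) else 0) = 0"
    proof (rule sum.neutral, rule ballI)
      fix k assume "k \<in> {..length w}"
      then show "(if take k w \<in> dw D then ?f (take k w) else 0) = 0" by (intro z) simp
    qed
    have s1: "lkp (pr D (A * B)) w = 0" using False by (auto simp: lookup_pr)
    show ?thesis by (simp only: s0 s1)
  qed
  finally show "lkp (pr D (A * B)) w = lkp (\<Sum>u\<in>dw D. sc (lkp A u) (sng u 1 * pr (D - set u) B)) w" by simp
qed

lemma pr_mult_right:
  fixes A B :: "'a::field R"
  assumes "finite D"
  shows "pr D (B * A) = (\<Sum>u\<in>dw D. sc (lkp A u) (pr (D - set u) B * sng u 1))"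
proof (rule poly_mapping_eqI)
  fix w
  let ?f = "\<lambda>u. lkp A u * (if distinct (take (length w - length u) w) \<and> set (take (length w - length u) w) = D - set u then lkp B (take (length w - length u) w) else 0)"
  have "lkp (\<Sum>u\<in>dw D. sc (lkp A u) (pr (D - set u) B * sng u 1)) w =
        (\<Sum>u\<in>dw D. if length u \<le> length w \<and> drop (length w - length u) w = u then ?f u else 0)"
    unfolding lookup_sum by (rule sum.cong) (auto simp: lookup_mult_sng lookup_pr mult.commute)
  also have "\<dots> = (\<Sum>k\<le>length w. if drop k w \<in> dw D then ?f (drop k w) else 0)"
    by (rule sum_suffixes[OF finite_dw[OF assms]])
  also have "\<dots> = lkp (pr D (B * A)) w"
  proof (cases "distinct w \<and> set w = D")
    case True
    have "(if drop k w \<in> dw D then ?f (drop k w) else 0) = lkp B (take k w) * lkp A (drop k w)"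
      if "k \<le> length w" for k
    proof -
      have "drop k w \<in> dw D" using True by (auto simp: dw_def dest: in_set_dropD)
      moreover have "distinct (take k w)" using True by simp
      moreover have "set (take k w) = D - set (drop k w)"
        using True set_take_drop[of w k] by simp
      ultimately show ?thesis using that by (simp add: min_def mult.commute)
    qed
    then show ?thesis using True by (simp add: lookup_pr lookup_mult_list)
  next
    case False
    have z: "(if drop k w \<in> dw D then ?f (drop k w) else 0) = 0" if "k \<le> length w" for k
    proof (rule ccontr)
      assume nz: "(if drop k w \<in> dw D then ?f (drop k w) else 0) \<noteq> 0"
      have lk: "length w - (length w - k) = k" using that by simp
      from nz have h: "drop k w \<in> dw D" "distinct (take k w)" "set (take k w) = D - set (drop k w)"
        by (simp_all add: lk split: if_splits)
      have "distinct (take k w) \<and> distinct (drop k w) \<and> set (take k w) \<inter> set (drop k w) = {}" using h by (auto simp: dw_def)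
      then have "distinct w" by (metis append_take_drop_id distinct_append)
      moreover have "set (take k w) \<union> set (drop k w) = D" using h by (auto simp: dw_def)
      then have "set w = D" by (metis append_take_drop_id set_append)
      ultimately show False using False by simp
    qed
    have s0: "(\<Sum>k\<le>length w. if drop k w \<in> dw D then ?f (drop k w) else 0) = 0"
    proof (rule sum.neutral, rule ballI)
      fix k assume "k \<in> {..length w}"
      then show "(if drop k w \<in> dw D then ?f (drop k w) else 0) = 0" by (intro z) simp
    qed
    have s1: "lkp (pr D (B * A)) w = 0" using False by (auto simp: lookup_pr)
    show ?thesis by (simp only: s0 s1)
  qed
  finally show "lkp (pr D (B * A)) w = lkp (\<Sum>u\<in>dw D. sc (lkp A u) (pr (D - set u) B * sng u 1)) w" by simp
qed




definition perms :: "nat list set \<Rightarrow> nat list list set" where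
  "perms W = {L. distinct L \<and> set L = W}"

definition bl :: "nat list set \<Rightarrow> 'a::field R" where
  "bl W = (\<Sum>L\<in>perms W. sng (concat L) 1)"

definition Part :: "nat \<Rightarrow> nat set \<Rightarrow> nat list set set" where
  "Part k D = {W. finite W \<and> card W = k \<and> (\<forall>A\<in>W. A \<noteq> [] \<and> distinct A) \<and>
      (\<forall>A\<in>W. \<forall>B\<in>W. A \<noteq> B \<longrightarrow> set A \<inter> set B = {}) \<and> (\<Union>A\<in>W. set A) = D}"

lemma Part_finite: "W \<in> Part k D \<Longrightarrow> finite W"
  by (simp add: Part_def)

lemma finite_perms: "finite W \<Longrightarrow> finite (perms W)"
proof -
  assume "finite W"
  have "perms W \<subseteq> {xs. set xs \<subseteq> W \<and> length xs \<le> card W}"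
  proof
    fix u assume "u \<in> perms W"
    then have "distinct u" "set u = W" by (auto simp: perms_def)
    then show "u \<in> {xs. set xs \<subseteq> W \<and> length xs \<le> card W}"
      using distinct_card[of u] by simp
  qed
  then show ?thesis using finite_lists_length_le[OF \<open>finite W\<close>] finite_subset by blast
qed

lemma perms_empty: "perms {} = {[]}"
  by (auto simp: perms_def)

lemma sng_nil_one [simp]: "sng ([]::nat list) (1::'a::field) = 1"
  by (metis single_one zero_list_def)

lemma bl_empty [simp]: "bl {} = 1"
  by (simp add: bl_def perms_empty)

lemma perms_nonempty:
  assumes "W \<noteq> {}"
  shows "perms W = (\<Union>u\<in>W. Cons u ` perms (W - {u}))"
proof
  show "perms W \<subseteq> (\<Union>u\<in>W. Cons u ` perms (W - {u}))"
  proof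
    fix L assume "L \<in> perms W"
    then have L: "distinct L" "set L = W" by (auto simp: perms_def)
    then obtain u L' where "L = u # L'" using assms by (cases L) auto
    with L have "u \<in> W" "L' \<in> perms (W - {u})" by (auto simp: perms_def)
    then show "L \<in> (\<Union>u\<in>W. Cons u ` perms (W - {u}))"
      using \<open>L = u # L'\<close> by blast
  qed
next
  show "(\<Union>u\<in>W. Cons u ` perms (W - {u})) \<subseteq> perms W"
  proof (rule UN_least)
    fix u assume u: "u \<in> W"
    show "Cons u ` perms (W - {u}) \<subseteq> perms W"
    proof
      fix L assume "L \<in> Cons u ` perms (W - {u})"
      then obtain L' where "L = u # L'" "distinct L'" "set L' = W - {u}" by (auto simp: perms_def)
      then show "L \<in> perms W" using u by (auto simp: perms_def)
    qed
  qed
qed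

lemma bl_rec:
  assumes "finite W" "W \<noteq> {}"
  shows "(bl W :: 'a::field R) = (\<Sum>u\<in>W. sng u 1 * bl (W - {u}))"
proof -
  have "(bl W :: 'a R) = (\<Sum>L\<in>(\<Union>u\<in>W. Cons u ` perms (W - {u})). sng (concat L) 1)"
    by (simp add: bl_def perms_nonempty[OF assms(2)])
  also have "\<dots> = (\<Sum>u\<in>W. \<Sum>L\<in>Cons u ` perms (W - {u}). sng (concat L) 1)"
    by (rule sum.UNION_disjoint) (auto simp: assms finite_perms)
  also have "\<dots> = (\<Sum>u\<in>W. sng u 1 * bl (W - {u}))"
  proof (rule sum.cong)
    fix u assume "u \<in> W"
    have "(\<Sum>L\<in>Cons u ` perms (W - {u}). sng (concat L) (1::'a)) = (\<Sum>L\<in>perms (W - {u}). sng (u @ concat L) 1)"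
      by (subst sum.reindex) auto
    also have "\<dots> = sng u 1 * bl (W - {u})"
      by (simp add: bl_def sum_distrib_left mult_sng_sng)
    finally show "(\<Sum>L\<in>Cons u ` perms (W - {u}). sng (concat L) (1::'a)) = sng u 1 * bl (W - {u})" .
  qed simp
  finally show ?thesis .
qed

lemma finite_Part: "finite D \<Longrightarrow> finite (Part k D)"
proof -
  assume "finite D"
  have "Part k D \<subseteq> Pow (dw D)"
    unfolding Part_def dw_def by auto
  then show ?thesis using finite_dw[OF \<open>finite D\<close>] finite_subset by blast
qed

lemma Part_0: "Part 0 D = (if D = {} then {{}} else {})"
  by (auto simp: Part_def)

lemma pr_one: "pr D (1 :: 'a::field R) = (if D = {} then 1 else 0)"
  by (rule poly_mapping_eqI) (auto simp: lookup_pr lookup_one zero_list_def when_def)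

lemma Part_insert:
  assumes "u \<in> dw D" "u \<noteq> []" "W \<in> Part k (D - set u)"
  shows "u \<notin> W" "insert u W \<in> Part (Suc k) D"
proof -
  from assms have W: "finite W" "card W = k" "\<forall>A\<in>W. A \<noteq> [] \<and> distinct A"
    "\<forall>A\<in>W. \<forall>B\<in>W. A \<noteq> B \<longrightarrow> set A \<inter> set B = {}" "(\<Union>A\<in>W. set A) = D - set u"
    by (auto simp: Part_def)
  show nu: "u \<notin> W"
  proof
    assume "u \<in> W"
    then have "set u \<subseteq> D - set u" using W(5) by blast
    then show False using assms(2) by (cases u) auto
  qed
  show "insert u W \<in> Part (Suc k) D"
    using W nu assms(1,2) unfolding Part_def dw_def by auto
qed

lemma Part_remove:
  assumes "W \<in> Part (Suc k) D" "u \<in> W"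
  shows "u \<in> dw D" "u \<noteq> []" "W - {u} \<in> Part k (D - set u)"
proof -
  from assms have W: "finite W" "card W = Suc k" "\<forall>A\<in>W. A \<noteq> [] \<and> distinct A"
    "\<forall>A\<in>W. \<forall>B\<in>W. A \<noteq> B \<longrightarrow> set A \<inter> set B = {}" "(\<Union>A\<in>W. set A) = D"
    by (auto simp: Part_def)
  show "u \<in> dw D" "u \<noteq> []" using W assms(2) by (auto simp: dw_def)
  have "(\<Union>A\<in>W - {u}. set A) = D - set u"
    using W(4,5) assms(2) by blast
  then show "W - {u} \<in> Part k (D - set u)"
    using W assms(2) unfolding Part_def by auto
qed

lemma pow_pr:
  fixes g :: "'a::field R"
  assumes "finite D" "lkp g [] = 0"
  shows "pr D (g ^ k) = (\<Sum>W\<in>Part k D. sc (\<Prod>w\<in>W. lkp g w) (bl W))"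
  using assms(1)
proof (induction k arbitrary: D)
  case 0
  then show ?case by (simp add: pr_one Part_0)
next
  case (Suc k)
  define F where "F = (\<lambda>(u, W). sc (lkp g u * (\<Prod>w\<in>W. lkp g w)) (sng u 1 * bl W :: 'a R))"
  define G where "G = (\<lambda>(W', u). sc (lkp g u * (\<Prod>w\<in>W' - {u}. lkp g w)) (sng u 1 * bl (W' - {u}) :: 'a R))"
  have "pr D (g ^ Suc k) = (\<Sum>u\<in>dw D. sc (lkp g u) (sng u 1 * pr (D - set u) (g ^ k)))"
    by (simp add: pr_mult_left Suc.prems)
  also have "\<dots> = (\<Sum>u\<in>dw D. \<Sum>W\<in>Part k (D - set u). F (u, W))"
    using Suc.prems by (simp add: Suc.IH F_def sum_distrib_left sc_mult_right sc_sum)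
  also have "\<dots> = (\<Sum>p\<in>Sigma (dw D) (\<lambda>u. Part k (D - set u)). F p)"
    using sum.Sigma[of "dw D" "\<lambda>u. Part k (D - set u)" "\<lambda>u W. F (u, W)"]
    by (simp add: finite_dw finite_Part Suc.prems case_prod_beta')
  also have "\<dots> = (\<Sum>p\<in>Sigma (Part (Suc k) D) (\<lambda>W. W). G p)"
  proof (rule sum.reindex_bij_witness_not_neutral[where S'="{p\<in>Sigma (dw D) (\<lambda>u. Part k (D - set u)). fst p = []}" and T'="{}"
        and i="\<lambda>(W', u). (u, W' - {u})" and j="\<lambda>(u, W). (insert u W, u)"])
    show "finite {p\<in>Sigma (dw D) (\<lambda>u. Part k (D - set u)). fst p = []}"
      by (rule finite_subset[of _ "Sigma (dw D) (\<lambda>u. Part k (D - set u))"]) (auto simp: finite_dw finite_Part Suc.prems)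
  next
    fix a assume "a \<in> Sigma (dw D) (\<lambda>u. Part k (D - set u)) - {p \<in> Sigma (dw D) (\<lambda>u. Part k (D - set u)). fst p = []}"
    then obtain u W where a: "a = (u, W)" "u \<in> dw D" "W \<in> Part k (D - set u)" "u \<noteq> []" by auto
    show "(case case a of (u, W) \<Rightarrow> (insert u W, u) of (W', u) \<Rightarrow> (u, W' - {u})) = a"
      using Part_insert[OF a(2,4,3)] a(1) by auto
    show "(case a of (u, W) \<Rightarrow> (insert u W, u)) \<in> Sigma (Part (Suc k) D) (\<lambda>W. W) - {}"
      using Part_insert[OF a(2,4,3)] a(1) by auto
  next
    fix b assume "b \<in> Sigma (Part (Suc k) D) (\<lambda>W. W) - {}"
    then obtain W u where b: "b = (W, u)" "W \<in> Part (Suc k) D" "u \<in> W" by auto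
    show "(case case b of (W', u) \<Rightarrow> (u, W' - {u}) of (u, W) \<Rightarrow> (insert u W, u)) = b"
      using b by (auto simp: insert_absorb)
    show "(case b of (W', u) \<Rightarrow> (u, W' - {u})) \<in> Sigma (dw D) (\<lambda>u. Part k (D - set u)) - {p \<in> Sigma (dw D) (\<lambda>u. Part k (D - set u)). fst p = []}"
      using Part_remove[OF b(2,3)] b(1) by auto
  next
    fix a assume "a \<in> {p \<in> Sigma (dw D) (\<lambda>u. Part k (D - set u)). fst p = []}"
    then show "F a = 0" using assms(2) by (auto simp: F_def)
  next
    fix b :: "nat list set \<times> nat list" assume "b \<in> {}" then show "G b = 0" by simp
  next
    fix a assume "a \<in> Sigma (dw D) (\<lambda>u. Part k (D - set u))"
    then obtain u W where a: "a = (u, W)" "u \<in> dw D" "W \<in> Part k (D - set u)" by auto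
    show "G (case a of (u, W) \<Rightarrow> (insert u W, u)) = F a"
    proof (cases "u = []")
      case True then show ?thesis using a(1) assms(2) by (simp add: F_def G_def)
    next
      case False
      then have "u \<notin> W" using Part_insert[OF a(2) False a(3)] by simp
      then show ?thesis using a(1) by (simp add: F_def G_def)
    qed
  qed simp
  also have "\<dots> = (\<Sum>W\<in>Part (Suc k) D. \<Sum>u\<in>W. G (W, u))"
    using sum.Sigma[of "Part (Suc k) D" "\<lambda>W. W" "\<lambda>W u. G (W, u)"]
    by (simp add: finite_Part Suc.prems case_prod_beta' Part_finite)
  also have "\<dots> = (\<Sum>W\<in>Part (Suc k) D. sc (\<Prod>w\<in>W. lkp g w) (bl W))"
  proof (rule sum.cong)
    fix W assume W: "W \<in> Part (Suc k) D"
    then have fin: "finite W" and ne: "W \<noteq> {}" by (auto simp: Part_def)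
    have "(\<Sum>u\<in>W. G (W, u)) = (\<Sum>u\<in>W. sc (\<Prod>w\<in>W. lkp g w) (sng u 1 * bl (W - {u})))"
      by (rule sum.cong) (auto simp: G_def prod.remove[OF fin])
    also have "\<dots> = sc (\<Prod>w\<in>W. lkp g w) (bl W)"
      by (simp add: bl_rec[OF fin ne] sc_sum)
    finally show "(\<Sum>u\<in>W. G (W, u)) = sc (\<Prod>w\<in>W. lkp g w) (bl W)" .
  qed simp
  finally show ?case .
qed





inductive_set spn :: "'a::field R set \<Rightarrow> 'a R set" for G where
  spn_0: "0 \<in> spn G"
| spn_gen: "x \<in> G \<Longrightarrow> x \<in> spn G"
| spn_add: "x \<in> spn G \<Longrightarrow> y \<in> spn G \<Longrightarrow> x + y \<in> spn G"
| spn_sc: "x \<in> spn G \<Longrightarrow> sc c x \<in> spn G"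

lemma spn_sum: "(\<And>i. i \<in> S \<Longrightarrow> f i \<in> spn G) \<Longrightarrow> sum f S \<in> spn G"
  by (induction S rule: infinite_finite_induct) (auto intro: spn.intros)

lemma sc_minus_one: "sc (-1) x = - x"
  by (rule poly_mapping_eqI) simp

lemma spn_uminus: "x \<in> spn G \<Longrightarrow> - x \<in> spn G"
  using spn_sc[of x G "-1"] by (simp add: sc_minus_one)

lemma spn_diff: "x \<in> spn G \<Longrightarrow> y \<in> spn G \<Longrightarrow> x - y \<in> spn G"
  by (simp only: diff_conv_add_uminus) (intro spn_add spn_uminus)

lemma spn_subset:
  assumes "x \<in> spn G" "G \<subseteq> spn H"
  shows "x \<in> spn H"
  using assms(1) by induction (use assms(2) in \<open>auto intro: spn.intros\<close>)

lemma pow_pr_spn: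
  assumes "finite D" "lkp g [] = 0"
  shows "pr D (g ^ k) \<in> spn (bl ` Part k D)"
  unfolding pow_pr[OF assms] by (intro spn_sum spn_sc spn_gen) auto

lemma Part_card: "W \<in> Part k D \<Longrightarrow> card W = k"
  by (simp add: Part_def)
lemma Part_ne: "W \<in> Part k D \<Longrightarrow> A \<in> W \<Longrightarrow> A \<noteq> []"
  by (simp add: Part_def)
lemma Part_dist: "W \<in> Part k D \<Longrightarrow> A \<in> W \<Longrightarrow> distinct A"
  by (simp add: Part_def)
lemma Part_disj: "W \<in> Part k D \<Longrightarrow> A \<in> W \<Longrightarrow> B \<in> W \<Longrightarrow> A \<noteq> B \<Longrightarrow> set A \<inter> set B = {}"
  by (simp add: Part_def)
lemma Part_Un: "W \<in> Part k D \<Longrightarrow> (\<Union>A\<in>W. set A) = D"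
  by (simp add: Part_def)

lemma Part_sub_eq:
  assumes "W \<in> Part j D" "W' \<in> Part k D" "W' \<subseteq> W"
  shows "W' = W"
proof (rule ccontr)
  assume "W' \<noteq> W"
  then obtain w where w: "w \<in> W" "w \<notin> W'" using assms(3) by blast
  have "w \<noteq> []" using Part_ne[OF assms(1) w(1)] .
  then obtain x where x: "x \<in> set w" by (cases w) auto
  have "x \<in> D" using Part_Un[OF assms(1)] w(1) x by blast
  then obtain w' where w': "w' \<in> W'" "x \<in> set w'" using Part_Un[OF assms(2)] by blast
  have "w' \<in> W" "w' \<noteq> w" using w' assms(3) w(2) by auto
  then have "set w \<inter> set w' = {}" using Part_disj[OF assms(1) w(1)] by auto
  then show False using x w'(2) by auto
qed

definition yW :: "nat list set \<Rightarrow> 'a::field R" where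
  "yW W = (\<Sum>w\<in>W. sng w 1)"

lemma lookup_yW: "finite W \<Longrightarrow> lkp (yW W) v = (if v \<in> W then 1 else 0)"
  by (simp add: yW_def lookup_sum lookup_single when_def)

lemma prod_indicator: "finite A \<Longrightarrow> (\<Prod>w\<in>A. if w \<in> W then (1::'a::field) else 0) = (if A \<subseteq> W then 1 else 0)"
  by (induction A rule: finite_induct) auto

lemma yW_nil: "W \<in> Part j D0 \<Longrightarrow> lkp (yW W) [] = 0"
  using Part_ne[of W j D0 "[]"] Part_finite[of W j D0] by (auto simp: lookup_yW)

lemma pr_pow_yW:
  assumes "finite D" "W \<in> Part j D0"
  shows "pr D ((yW W) ^ k) = (\<Sum>W'\<in>{W'\<in>Part k D. W' \<subseteq> W}. bl W')"
proof -
  have fin: "finite W" using Part_finite[OF assms(2)] .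
  have "pr D ((yW W) ^ k) = (\<Sum>W'\<in>Part k D. sc (\<Prod>w\<in>W'. lkp (yW W) w) (bl W'))"
    by (rule pow_pr[OF assms(1) yW_nil[OF assms(2)]])
  also have "\<dots> = (\<Sum>W'\<in>Part k D. if W' \<subseteq> W then bl W' else 0)"
    by (rule sum.cong) (simp_all add: lookup_yW[OF fin] prod_indicator Part_finite)
  also have "\<dots> = (\<Sum>W'\<in>{W'\<in>Part k D. W' \<subseteq> W}. bl W')"
    by (simp add: sum.inter_filter finite_Part assms(1))
  finally show ?thesis .
qed

lemma pr_pow_yW_same:
  assumes "finite D" "W \<in> Part j D"
  shows "pr D ((yW W) ^ k) = (if k = j then bl W else 0)"
proof -
  have eq: "{W'\<in>Part k D. W' \<subseteq> W} = (if k = j then {W} else {})"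
    using Part_sub_eq[OF assms(2)] Part_card[OF assms(2)] Part_card[of _ k D] assms(2)
    by auto
  show ?thesis
  proof (cases "k = j")
    case True then show ?thesis unfolding pr_pow_yW[OF assms] eq by simp
  next
    case False then show ?thesis unfolding pr_pow_yW[OF assms] eq by simp
  qed
qed

lemma pr_pow_yW_big:
  assumes "finite D" "W \<in> Part j D0" "j < k"
  shows "pr D ((yW W) ^ k) = 0"
proof -
  have "{W'\<in>Part k D. W' \<subseteq> W} = {}"
  proof (rule ccontr)
    assume "{W'\<in>Part k D. W' \<subseteq> W} \<noteq> {}"
    then obtain W' where "W' \<in> Part k D" "W' \<subseteq> W" by blast
    then have "card W' \<le> card W" using card_mono[OF Part_finite[OF assms(2)]] by blast
    then show False using Part_card[OF \<open>W' \<in> Part k D\<close>] Part_card[OF assms(2)] assms(3) by simp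
  qed
  then show ?thesis unfolding pr_pow_yW[OF assms(1,2)] by (simp only: sum.empty)
qed

section \<open>Reduction of the number of blocks\<close>

lemma yy_expand:
  fixes y :: "'b::ring_1"
  shows "\<exists>r. (y + y * y) ^ k = y ^ k + of_nat k * y ^ Suc k + y ^ Suc (Suc k) * r"
proof (induction k)
  case 0
  show ?case by (rule exI[of _ 0]) simp
next
  case (Suc k)
  then obtain r where r: "(y + y * y) ^ k = y ^ k + of_nat k * y ^ Suc k + y ^ Suc (Suc k) * r" by blast
  have zc: "y ^ k * (y * t) = y * (y ^ k * t)" for t
    by (simp add: mult.assoc[symmetric] power_commutes)
  have oc: "t * (of_nat k * s) = of_nat k * (t * s)" for t s :: 'b
    by (metis mult.assoc mult_of_nat_commute)
  have "(y + y * y) ^ Suc k = (y + y * y) * (y ^ k + of_nat k * y ^ Suc k + y ^ Suc (Suc k) * r)"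
    by (simp only: power_Suc r)
  also have "\<dots> = y ^ Suc k + of_nat (Suc k) * y ^ Suc (Suc k) + y ^ Suc (Suc (Suc k)) * (r + y * r + of_nat k)"
    by (simp add: algebra_simps zc oc power_commutes mult_of_nat_commute)
  finally show ?case by blast
qed

definition TT :: "nat \<Rightarrow> nat set \<Rightarrow> 'a::field R set" where
  "TT n D = spn (bl ` Part n D)"

lemma higher_in_TT:
  assumes "1 \<le> n" "finite D" "n \<le> k" "W \<in> Part k D"
  shows "(bl W :: 'a::field_char_0 R) \<in> TT n D"
  using assms(3,4)
proof (induction k arbitrary: W rule: dec_induct)
  case base
  then show ?case by (simp add: TT_def spn_gen)
next
  case (step k)
  define y :: "'a R" where "y = yW W"
  obtain r where r: "(y + y * y) ^ k = y ^ k + of_nat k * y ^ Suc k + y ^ Suc (Suc k) * r"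
    using yy_expand by blast
  have y0: "lkp y [] = 0" using yW_nil[OF step.prems] by (simp add: y_def)
  have yy0: "lkp (y + y * y) [] = 0" using y0 by (simp add: lookup_add lookup_mult_list)
  have p1: "pr D (y ^ k) = 0" using pr_pow_yW_same[OF assms(2) step.prems, of k] by (simp add: y_def)
  have p2: "pr D (y ^ Suc k) = bl W" using pr_pow_yW_same[OF assms(2) step.prems, of "Suc k"] by (simp add: y_def)
  have p3: "pr D (y ^ Suc (Suc k) * r) = 0"
  proof -
    have "pr D (y ^ Suc (Suc k) * r) = (\<Sum>u\<in>dw D. sc (lkp r u) (pr (D - set u) (y ^ Suc (Suc k)) * sng u 1))"
      by (rule pr_mult_right[OF assms(2)])
    also have "\<dots> = 0"
    proof (rule sum.neutral, rule ballI)
      fix u assume "u \<in> dw D"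
      have "pr (D - set u) (y ^ Suc (Suc k)) = 0"
        unfolding y_def by (rule pr_pow_yW_big[OF finite_Diff[OF assms(2)] step.prems]) simp
      then show "sc (lkp r u) (pr (D - set u) (y ^ Suc (Suc k)) * sng u 1) = 0" by simp
    qed
    finally show ?thesis .
  qed
  have "of_nat k * bl W = pr D ((y + y * y) ^ k)"
    by (simp only: r pr_add pr_of_nat p1 p2 p3) simp
  also have "\<dots> \<in> spn (bl ` Part k D)"
    by (rule pow_pr_spn[OF assms(2) yy0])
  finally have m: "(of_nat k * bl W :: 'a R) \<in> spn (bl ` Part k D)" .
  have sub: "(bl ` Part k D :: 'a R set) \<subseteq> spn (bl ` Part n D)" using step.IH unfolding TT_def by blast
  have "(of_nat k * bl W :: 'a R) \<in> TT n D" unfolding TT_def by (rule spn_subset[OF m sub])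
  then have "sc (1 / of_nat k) (of_nat k * bl W :: 'a R) \<in> TT n D"
    unfolding TT_def by (rule spn_sc)
  moreover have "sc (1 / of_nat k) (of_nat k * bl W :: 'a R) = bl W"
    using step.hyps assms(1) by (simp add: of_nat_sc)
  ultimately show ?case by simp
qed



definition cnt :: "nat \<Rightarrow> nat list \<Rightarrow> nat" where
  "cnt x v = length (filter ((=) x) v)"

definition si :: "nat \<Rightarrow> (nat \<Rightarrow> bool) \<Rightarrow> 'a::field R \<Rightarrow> bool" where
  "si x Q P \<longleftrightarrow> (\<forall>v\<in>kys P. Q (cnt x v))"

lemma si_0 [simp]: "si x Q 0"
  by (simp add: si_def)

lemma si_add: "si x Q P \<Longrightarrow> si x Q P' \<Longrightarrow> si x Q (P + P')"
  unfolding si_def using keys_add[of P P'] by blast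

lemma si_uminus: "si x Q P \<Longrightarrow> si x Q (- P)"
  unfolding si_def by (auto simp: in_keys_iff)

lemma si_diff: "si x Q P \<Longrightarrow> si x Q P' \<Longrightarrow> si x Q (P - P')"
  using si_add[of x Q P "- P'"] si_uminus[of x Q P'] by simp

lemma cnt_append [simp]: "cnt x (u @ v) = cnt x u + cnt x v"
  by (simp add: cnt_def)

lemma si_mult:
  assumes "si x Q1 P" "si x Q2 P'" "\<And>i j. Q1 i \<Longrightarrow> Q2 j \<Longrightarrow> Q3 (i + j)"
  shows "si x Q3 (P * P')"
  unfolding si_def
proof
  fix v assume "v \<in> kys (P * P')"
  then obtain a b where "v = a + b" "a \<in> kys P" "b \<in> kys P'" using keys_mult[of P P'] by blast
  then show "Q3 (cnt x v)" using assms unfolding si_def by (simp add: plus_list_def)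
qed

lemma si_mono: "si x Q P \<Longrightarrow> (\<And>i. Q i \<Longrightarrow> Q' i) \<Longrightarrow> si x Q' P"
  unfolding si_def by blast

lemma si_True: "si x (\<lambda>_. True) P"
  by (simp add: si_def)

lemma si_one: "si x (\<lambda>i. i = 0) (1::'a::field R)"
  by (simp add: si_def zero_list_def cnt_def)

lemma cnt_distinct: "distinct v \<Longrightarrow> x \<in> set v \<Longrightarrow> cnt x v = 1"
  by (induction v) (auto simp: cnt_def filter_empty_conv)

lemma pr_si:
  assumes "x \<in> D" "si x (\<lambda>i. i \<noteq> 1) P"
  shows "pr D P = 0"
proof (rule poly_mapping_eqI)
  fix v
  show "lkp (pr D P) v = lkp 0 v"
  proof (cases "distinct v \<and> set v = D")
    case True
    then have "cnt x v = 1" using assms(1) cnt_distinct by auto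
    then have "v \<notin> kys P" using assms(2) unfolding si_def by auto
    then show ?thesis using True by (simp add: lookup_pr in_keys_iff)
  next
    case False then show ?thesis by (auto simp: lookup_pr)
  qed
qed

lemma rid1: "((y::'b::ring_1) + a) * P - y * z = y * (P - z) + a * P"
  by (simp add: algebra_simps)
lemma rid2: "((y::'b::ring_1) + y * a) * Q - y * z = y * (Q - z) + (y * a) * Q"
  by (simp add: algebra_simps)
lemma rid3: "((y::'b::ring_1) + a) * P - (y + y * a) * Q - a * (y * z) = y * (P - Q - a * z) + a * (P - y * z) - (y * a) * (Q - z)"
  by (simp add: algebra_simps)
lemma rid1': "P * ((y::'b::ring_1) + a) - z * y = (P - z) * y + P * a"
  by (simp add: algebra_simps)
lemma rid2': "Q * ((y::'b::ring_1) + a * y) - z * y = (Q - z) * y + Q * (a * y)"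
  by (simp add: algebra_simps)
lemma rid3': "P * ((y::'b::ring_1) + a) - Q * (y + a * y) - (z * y) * a = (P - Q - z * a) * y + (P - z * y) * a - (Q - z) * (a * y)"
  by (simp add: algebra_simps)

section \<open>Multiplying blocks by a monomial\<close>

context
  fixes n :: nat and D :: "nat set" and u :: "nat list" and W :: "nat list set"
  assumes n1: "1 \<le> n" and fD: "finite D" and u: "u \<in> dw D" "u \<noteq> []"
    and W: "W \<in> Part n (D - set u)"
begin

definition "yy = (yW W :: 'a::field R)"
definition "aa = (sng u 1 :: 'a::field R)"

lemma xu: "hd u \<in> set u" using u(2) by simp
lemma xD: "hd u \<in> D" using u(1) xu by (auto simp: dw_def)
lemma finW: "finite W" using Part_finite[OF W] .

lemma sy: "si (hd u) (\<lambda>i. i = 0) yy"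
proof (unfold si_def, rule ballI)
  fix v assume "v \<in> kys yy"
  then have "v \<in> W" by (simp add: yy_def lookup_yW[OF finW] in_keys_iff split: if_splits)
  then have "set v \<subseteq> D - set u" using Part_Un[OF W] by blast
  then have "hd u \<notin> set v" using xu by blast
  then show "cnt (hd u) v = 0" by (auto simp: cnt_def filter_empty_conv)
qed

lemma sa: "si (hd u) (\<lambda>i. i = 1) aa"
  using cnt_distinct[of u "hd u"] u(1) xu by (simp add: aa_def si_def dw_def)

lemma sya: "si (hd u) (\<lambda>i. i = 1) (yy * aa)"
  by (rule si_mult[OF sy sa]) simp

lemma say: "si (hd u) (\<lambda>i. i = 1) (aa * yy)"
  by (rule si_mult[OF sa sy]) simp

lemma E1: "si (hd u) (\<lambda>i. i \<ge> 1) (((yy::'a::field R) + aa) ^ j - yy ^ j)"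
proof (induction j)
  case 0 show ?case by simp
next
  case (Suc j)
  have eq: "((yy::'a R) + aa) ^ Suc j - yy ^ Suc j = yy * ((yy + aa) ^ j - yy ^ j) + aa * (yy + aa) ^ j"
    by (simp only: power_Suc rid1)
  have s1: "si (hd u) (\<lambda>i. i \<ge> 1) ((yy::'a R) * ((yy + aa) ^ j - yy ^ j))" by (rule si_mult[OF sy Suc.IH]) simp
  have s2: "si (hd u) (\<lambda>i. i \<ge> 1) (aa * ((yy::'a R) + aa) ^ j)" by (rule si_mult[OF sa si_True]) simp
  show ?case unfolding eq by (rule si_add[OF s1 s2])
qed

lemma E2: "si (hd u) (\<lambda>i. i \<ge> 1) (((yy::'a::field R) + yy * aa) ^ j - yy ^ j)"
proof (induction j)
  case 0 show ?case by simp
next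
  case (Suc j)
  have eq: "((yy::'a R) + yy * aa) ^ Suc j - yy ^ Suc j = yy * ((yy + yy * aa) ^ j - yy ^ j) + (yy * aa) * (yy + yy * aa) ^ j"
    by (simp only: power_Suc rid2)
  have s1: "si (hd u) (\<lambda>i. i \<ge> 1) ((yy::'a R) * ((yy + yy * aa) ^ j - yy ^ j))" by (rule si_mult[OF sy Suc.IH]) simp
  have s2: "si (hd u) (\<lambda>i. i \<ge> 1) (((yy::'a R) * aa) * (yy + yy * aa) ^ j)" by (rule si_mult[OF sya si_True]) simp
  show ?case unfolding eq by (rule si_add[OF s1 s2])
qed

lemma E2': "si (hd u) (\<lambda>i. i \<ge> 1) (((yy::'a::field R) + aa * yy) ^ j - yy ^ j)"
proof (induction j)
  case 0 show ?case by simp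
next
  case (Suc j)
  have eq: "((yy::'a R) + aa * yy) ^ Suc j - yy ^ Suc j = ((yy + aa * yy) ^ j - yy ^ j) * yy + (yy + aa * yy) ^ j * (aa * yy)"
    by (simp only: power_Suc2 rid2')
  have s1: "si (hd u) (\<lambda>i. i \<ge> 1) ((((yy::'a R) + aa * yy) ^ j - yy ^ j) * yy)" by (rule si_mult[OF Suc.IH sy]) simp
  have s2: "si (hd u) (\<lambda>i. i \<ge> 1) (((yy::'a R) + aa * yy) ^ j * (aa * yy))" by (rule si_mult[OF si_True say]) simp
  show ?case unfolding eq by (rule si_add[OF s1 s2])
qed

lemma E3: "si (hd u) (\<lambda>i. i \<noteq> 1) (((yy::'a::field R) + aa) ^ Suc j - (yy + yy * aa) ^ j - aa * yy ^ j)"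
proof (induction j)
  case 0
  have eq: "((yy::'a R) + aa) ^ Suc 0 - (yy + yy * aa) ^ 0 - aa * yy ^ 0 = yy - 1" by simp
  show ?case unfolding eq by (rule si_mono[OF si_diff[OF sy si_one]]) simp
next
  case (Suc j)
  have eq: "((yy::'a R) + aa) ^ Suc (Suc j) - (yy + yy * aa) ^ Suc j - aa * yy ^ Suc j =
     yy * ((yy + aa) ^ Suc j - (yy + yy * aa) ^ j - aa * yy ^ j) + aa * ((yy + aa) ^ Suc j - yy * yy ^ j)
     - (yy * aa) * ((yy + yy * aa) ^ j - yy ^ j)"
    by (simp only: power_Suc[of "yy + aa" "Suc j"] power_Suc[of "yy + yy * aa" j] power_Suc[of yy j] rid3)
  have e1: "si (hd u) (\<lambda>i. i \<ge> 1) (((yy::'a R) + aa) ^ Suc j - yy * yy ^ j)"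
    using E1[of "Suc j"] by (simp only: power_Suc[of yy j])
  have s1: "si (hd u) (\<lambda>i. i \<noteq> 1) ((yy::'a R) * ((yy + aa) ^ Suc j - (yy + yy * aa) ^ j - aa * yy ^ j))"
    by (rule si_mult[OF sy Suc.IH]) simp
  have s2: "si (hd u) (\<lambda>i. i \<noteq> 1) (aa * (((yy::'a R) + aa) ^ Suc j - yy * yy ^ j))"
    by (rule si_mult[OF sa e1]) simp
  have s3: "si (hd u) (\<lambda>i. i \<noteq> 1) (((yy::'a R) * aa) * ((yy + yy * aa) ^ j - yy ^ j))"
    by (rule si_mult[OF sya E2]) simp
  show ?case unfolding eq by (rule si_diff[OF si_add[OF s1 s2] s3])
qed

lemma E3': "si (hd u) (\<lambda>i. i \<noteq> 1) (((yy::'a::field R) + aa) ^ Suc j - (yy + aa * yy) ^ j - yy ^ j * aa)"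
proof (induction j)
  case 0
  have eq: "((yy::'a R) + aa) ^ Suc 0 - (yy + aa * yy) ^ 0 - yy ^ 0 * aa = yy - 1" by simp
  show ?case unfolding eq by (rule si_mono[OF si_diff[OF sy si_one]]) simp
next
  case (Suc j)
  have eq: "((yy::'a R) + aa) ^ Suc (Suc j) - (yy + aa * yy) ^ Suc j - yy ^ Suc j * aa =
     ((yy + aa) ^ Suc j - (yy + aa * yy) ^ j - yy ^ j * aa) * yy + ((yy + aa) ^ Suc j - yy ^ j * yy) * aa
     - ((yy + aa * yy) ^ j - yy ^ j) * (aa * yy)"
    by (simp only: power_Suc2[of "yy + aa" "Suc j"] power_Suc2[of "yy + aa * yy" j] power_Suc2[of yy j] rid3')
  have e1: "si (hd u) (\<lambda>i. i \<ge> 1) (((yy::'a R) + aa) ^ Suc j - yy ^ j * yy)"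
    using E1[of "Suc j"] by (simp only: power_Suc2[of yy j])
  have s1: "si (hd u) (\<lambda>i. i \<noteq> 1) ((((yy::'a R) + aa) ^ Suc j - (yy + aa * yy) ^ j - yy ^ j * aa) * yy)"
    by (rule si_mult[OF Suc.IH sy]) simp
  have s2: "si (hd u) (\<lambda>i. i \<noteq> 1) ((((yy::'a R) + aa) ^ Suc j - yy ^ j * yy) * aa)"
    by (rule si_mult[OF e1 sa]) simp
  have s3: "si (hd u) (\<lambda>i. i \<noteq> 1) ((((yy::'a R) + aa * yy) ^ j - yy ^ j) * (aa * yy))"
    by (rule si_mult[OF E2' say]) simp
  show ?case unfolding eq by (rule si_diff[OF si_add[OF s1 s2] s3])
qed

lemma y0: "lkp yy [] = 0" using yW_nil[OF W] by (simp add: yy_def)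
lemma a0: "lkp aa [] = 0" using u(2) by (simp add: aa_def lookup_single when_def)

lemma pr_yn: "pr (D - set u) (yy ^ n) = bl W"
  using pr_pow_yW_same[OF finite_Diff[OF fD] W, of n] by (simp add: yy_def)

lemma pF: "(pr D ((yy + aa) ^ Suc n) :: 'a::field_char_0 R) \<in> TT n D"
proof -
  have "lkp ((yy::'a R) + aa) [] = 0" using y0[where 'a='a] a0[where 'a='a] by (simp add: lookup_add)
  then have m: "(pr D ((yy + aa) ^ Suc n) :: 'a R) \<in> spn (bl ` Part (Suc n) D)"
    by (rule pow_pr_spn[OF fD])
  have sub: "(bl ` Part (Suc n) D :: 'a R set) \<subseteq> spn (bl ` Part n D)"
    using higher_in_TT[OF n1 fD, of "Suc n"] unfolding TT_def by auto
  show ?thesis unfolding TT_def by (rule spn_subset[OF m sub])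
qed

lemma pH: "(pr D ((yy + yy * aa) ^ n) :: 'a::field R) \<in> TT n D"
proof -
  have "lkp ((yy::'a R) + yy * aa) [] = 0" using y0[where 'a='a] a0[where 'a='a] by (simp add: lookup_add lookup_mult_list)
  then show ?thesis unfolding TT_def by (rule pow_pr_spn[OF fD])
qed

lemma pH': "(pr D ((yy + aa * yy) ^ n) :: 'a::field R) \<in> TT n D"
proof -
  have "lkp ((yy::'a R) + aa * yy) [] = 0" using y0[where 'a='a] a0[where 'a='a] by (simp add: lookup_add lookup_mult_list)
  then show ?thesis unfolding TT_def by (rule pow_pr_spn[OF fD])
qed

lemma pa: "pr D (aa * yy ^ n) = (aa * bl W :: 'a::field R)"
proof -
  have "pr D (aa * (yy::'a R) ^ n) = (\<Sum>v\<in>dw D. sc (lkp aa v) (sng v 1 * pr (D - set v) (yy ^ n)))"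
    by (rule pr_mult_left[OF fD])
  also have "\<dots> = (\<Sum>v\<in>dw D. if v = u then sng v 1 * pr (D - set v) (yy ^ n) else 0)"
    by (rule sum.cong) (auto simp: aa_def lookup_single when_def)
  also have "\<dots> = aa * bl W"
    using u(1) finite_dw[OF fD] by (simp add: aa_def pr_yn)
  finally show ?thesis .
qed

lemma pa': "pr D (yy ^ n * aa) = (bl W * aa :: 'a::field R)"
proof -
  have "pr D ((yy::'a R) ^ n * aa) = (\<Sum>v\<in>dw D. sc (lkp aa v) (pr (D - set v) (yy ^ n) * sng v 1))"
    by (rule pr_mult_right[OF fD])
  also have "\<dots> = (\<Sum>v\<in>dw D. if v = u then pr (D - set v) (yy ^ n) * sng v 1 else 0)"
    by (rule sum.cong) (auto simp: aa_def lookup_single when_def)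
  also have "\<dots> = bl W * aa"
    using u(1) finite_dw[OF fD] by (simp add: aa_def pr_yn)
  finally show ?thesis .
qed

lemma C2_left: "(sng u 1 * bl W :: 'a::field_char_0 R) \<in> TT n D"
proof -
  have z: "pr D ((yy + aa) ^ Suc n - (yy + yy * aa) ^ n - aa * yy ^ n) = (0 :: 'a R)"
    by (rule pr_si[OF xD E3])
  then have "(aa * bl W :: 'a R) = pr D ((yy + aa) ^ Suc n) - pr D ((yy + yy * aa) ^ n)"
    by (simp add: pr_diff pa)
  also have "\<dots> \<in> TT n D" unfolding TT_def
    by (rule spn_diff[OF pF[unfolded TT_def] pH[unfolded TT_def]])
  finally show ?thesis by (simp add: aa_def)
qed

lemma C2_right: "(bl W * sng u 1 :: 'a::field_char_0 R) \<in> TT n D"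
proof -
  have z: "pr D ((yy + aa) ^ Suc n - (yy + aa * yy) ^ n - yy ^ n * aa) = (0 :: 'a R)"
    by (rule pr_si[OF xD E3'])
  then have "(bl W * aa :: 'a R) = pr D ((yy + aa) ^ Suc n) - pr D ((yy + aa * yy) ^ n)"
    by (simp add: pr_diff pa')
  also have "\<dots> \<in> TT n D" unfolding TT_def
    by (rule spn_diff[OF pF[unfolded TT_def] pH'[unfolded TT_def]])
  finally show ?thesis by (simp add: aa_def)
qed

end



lemma TT_mult_left:
  assumes "1 \<le> n" "finite D" "u \<in> dw D" "u \<noteq> []" "X \<in> TT n (D - set u)"
  shows "(sng u 1 * X :: 'a::field_char_0 R) \<in> TT n D"
proof -
  have "X \<in> spn (bl ` Part n (D - set u))" using assms(5) by (simp add: TT_def)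
  then show ?thesis
  proof induction
    case spn_0 then show ?case by (simp add: TT_def spn.spn_0)
  next
    case (spn_gen x)
    then obtain W where "x = bl W" "W \<in> Part n (D - set u)" by auto
    then show ?case using C2_left[OF assms(1-4)] by simp
  next
    case (spn_add x y) then show ?case by (simp add: distrib_left TT_def spn.spn_add)
  next
    case (spn_sc x c) then show ?case by (simp add: sc_mult_right TT_def spn.spn_sc)
  qed
qed

lemma TT_mult_right:
  assumes "1 \<le> n" "finite D" "u \<in> dw D" "u \<noteq> []" "X \<in> TT n (D - set u)"
  shows "(X * sng u 1 :: 'a::field_char_0 R) \<in> TT n D"
proof -
  have "X \<in> spn (bl ` Part n (D - set u))" using assms(5) by (simp add: TT_def)
  then show ?thesis
  proof induction
    case spn_0 then show ?case by (simp add: TT_def spn.spn_0)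
  next
    case (spn_gen x)
    then obtain W where "x = bl W" "W \<in> Part n (D - set u)" by auto
    then show ?case using C2_right[OF assms(1-4)] by simp
  next
    case (spn_add x y) then show ?case by (simp add: distrib_right TT_def spn.spn_add)
  next
    case (spn_sc x c) then show ?case by (simp add: sc_mult_left TT_def spn.spn_sc)
  qed
qed

definition Good :: "nat \<Rightarrow> 'a::field R \<Rightarrow> bool" where
  "Good n P \<longleftrightarrow> (\<forall>D. finite D \<longrightarrow> pr D P \<in> TT n D)"

lemma Good_0: "Good n 0"
  by (simp add: Good_def TT_def spn.spn_0)

lemma Good_add: "Good n P \<Longrightarrow> Good n Q \<Longrightarrow> Good n (P + Q)"
  by (simp add: Good_def TT_def pr_add spn.spn_add)

lemma Good_sc: "Good n P \<Longrightarrow> Good n (sc c P)"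
  by (simp add: Good_def TT_def pr_sc spn.spn_sc)

lemma gs_nil: "gs A \<Longrightarrow> lkp A [] = 0"
  by (auto simp: gs_def in_keys_iff)

lemma Good_mult_left:
  assumes "1 \<le> n" "gs A" "Good n P"
  shows "Good n (A * P :: 'a::field_char_0 R)"
  unfolding Good_def
proof (intro allI impI)
  fix D :: "nat set" assume fD: "finite D"
  have "pr D (A * P) = (\<Sum>u\<in>dw D. sc (lkp A u) (sng u 1 * pr (D - set u) P))"
    by (rule pr_mult_left[OF fD])
  also have "\<dots> \<in> TT n D" unfolding TT_def
  proof (rule spn_sum)
    fix u assume u: "u \<in> dw D"
    show "sc (lkp A u) (sng u 1 * pr (D - set u) P) \<in> spn (bl ` Part n D)"
    proof (cases "u = []")
      case True then show ?thesis using gs_nil[OF assms(2)] by (simp add: spn.spn_0)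
    next
      case False
      have "pr (D - set u) P \<in> TT n (D - set u)" using assms(3) fD by (simp add: Good_def)
      then have "sng u 1 * pr (D - set u) P \<in> TT n D" by (rule TT_mult_left[OF assms(1) fD u False])
      then show ?thesis unfolding TT_def by (rule spn.spn_sc)
    qed
  qed
  finally show "pr D (A * P) \<in> TT n D" .
qed

lemma Good_mult_right:
  assumes "1 \<le> n" "gs A" "Good n P"
  shows "Good n (P * A :: 'a::field_char_0 R)"
  unfolding Good_def
proof (intro allI impI)
  fix D :: "nat set" assume fD: "finite D"
  have "pr D (P * A) = (\<Sum>u\<in>dw D. sc (lkp A u) (pr (D - set u) P * sng u 1))"
    by (rule pr_mult_right[OF fD])
  also have "\<dots> \<in> TT n D" unfolding TT_def
  proof (rule spn_sum)
    fix u assume u: "u \<in> dw D"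
    show "sc (lkp A u) (pr (D - set u) P * sng u 1) \<in> spn (bl ` Part n D)"
    proof (cases "u = []")
      case True then show ?thesis using gs_nil[OF assms(2)] by (simp add: spn.spn_0)
    next
      case False
      have "pr (D - set u) P \<in> TT n (D - set u)" using assms(3) fD by (simp add: Good_def)
      then have "pr (D - set u) P * sng u 1 \<in> TT n D" by (rule TT_mult_right[OF assms(1) fD u False])
      then show ?thesis unfolding TT_def by (rule spn.spn_sc)
    qed
  qed
  finally show "pr D (P * A) \<in> TT n D" .
qed

lemma Good_pow: "gs g \<Longrightarrow> Good n (g ^ n)"
  unfolding Good_def TT_def by (auto intro: pow_pr_spn gs_nil)

section \<open>The ideal argument\<close>

lemma ncpolys_lkp_gs: "gs P \<Longrightarrow> lkp P \<in> ncpolys"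
  by (simp add: lkp_ncpolys)

lemma nczero_ncpolys: "nczero \<in> ncpolys"
  by (simp add: nczero_lkp lkp_ncpolys)

lemma ncmult_ncpolys: "p \<in> ncpolys \<Longrightarrow> q \<in> ncpolys \<Longrightarrow> ncmult p q \<in> ncpolys"
  by (metis ncpolys_ex ncmult_lkp gs_mult lkp_ncpolys)

lemma ncadd_ncpolys: "p \<in> ncpolys \<Longrightarrow> q \<in> ncpolys \<Longrightarrow> ncadd p q \<in> ncpolys"
  by (metis ncpolys_ex ncadd_lkp gs_add lkp_ncpolys)

lemma ncscale_ncpolys: "p \<in> ncpolys \<Longrightarrow> ncscale c p \<in> ncpolys"
  by (metis ncpolys_ex ncscale_lkp gs_sc lkp_ncpolys)

lemma ncpow_ncpolys: "p \<in> ncpolys \<Longrightarrow> ncpow p (Suc k) \<in> ncpolys"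
  by (metis ncpolys_ex ncpow_lkp gs_pow lkp_ncpolys)

lemma endo_zero:
  assumes "is_ncendo \<phi>"
  shows "\<phi> nczero = nczero"
proof -
  have "\<phi> (ncscale 0 nczero) = ncscale 0 (\<phi> nczero)"
    using assms nczero_ncpolys unfolding is_ncendo_def by blast
  moreover have "ncscale 0 q = nczero" for q :: "'a ncpoly"
    by (simp add: ncscale_def nczero_def)
  ultimately show ?thesis by metis
qed

lemma endo_pow:
  assumes "is_ncendo \<phi>" "p \<in> ncpolys"
  shows "\<phi> (ncpow p (Suc k)) = ncpow (\<phi> p) (Suc k)"
proof (induction k)
  case 0 show ?case by simp
next
  case (Suc k)
  have "\<phi> (ncpow p (Suc (Suc k))) = \<phi> (ncmult p (ncpow p (Suc k)))" by simp
  also have "\<dots> = ncmult (\<phi> p) (\<phi> (ncpow p (Suc k)))"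
    using assms ncpow_ncpolys[OF assms(2), of k] unfolding is_ncendo_def by blast
  also have "\<dots> = ncpow (\<phi> p) (Suc (Suc k))" by (simp add: Suc.IH)
  finally show ?case .
qed

lemma endo_comp: "is_ncendo \<phi> \<Longrightarrow> is_ncendo \<psi> \<Longrightarrow> is_ncendo (\<psi> \<circ> \<phi>)"
  unfolding is_ncendo_def by (auto simp: image_subset_iff)

lemma endo_id: "is_ncendo id"
  by (simp add: is_ncendo_def)

definition GI :: "nat \<Rightarrow> ('a::field_char_0) ncpoly set" where
  "GI n = {p \<in> ncpolys. \<forall>\<phi>. is_ncendo \<phi> \<longrightarrow> (\<exists>P. \<phi> p = lkp P \<and> Good n P)}"

lemma endo_lkp:
  assumes "is_ncendo \<phi>" "p \<in> ncpolys"
  obtains P where "\<phi> p = lkp P" "gs P"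
proof -
  have "\<phi> p \<in> ncpolys" using assms unfolding is_ncendo_def by blast
  then obtain P where "\<phi> p = lkp P" "gs P" using ncpolys_ex by blast
  then show ?thesis using that by blast
qed

lemma GI_ideal:
  assumes "1 \<le> n"
  shows "is_ncideal (GI n :: 'a::field_char_0 ncpoly set)"
  unfolding is_ncideal_def
proof (intro conjI ballI allI)
  show "GI n \<subseteq> ncpolys" by (auto simp: GI_def)
next
  show "nczero \<in> GI n"
    using nczero_ncpolys endo_zero by (auto simp: GI_def nczero_lkp intro: Good_0)
next
  fix p q :: "'a ncpoly" assume p: "p \<in> GI n" and q: "q \<in> GI n"
  show "ncadd p q \<in> GI n"
    unfolding GI_def
  proof (intro CollectI conjI allI impI)
    show "ncadd p q \<in> ncpolys" using p q by (auto simp: GI_def intro: ncadd_ncpolys)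
    fix \<phi> :: "'a ncpoly \<Rightarrow> 'a ncpoly" assume e: "is_ncendo \<phi>"
    obtain P where P: "\<phi> p = lkp P" "Good n P" using p e by (auto simp: GI_def)
    obtain Q where Q: "\<phi> q = lkp Q" "Good n Q" using q e by (auto simp: GI_def)
    have "\<phi> (ncadd p q) = ncadd (\<phi> p) (\<phi> q)" using e p q unfolding is_ncendo_def GI_def by blast
    then have "\<phi> (ncadd p q) = lkp (P + Q)" by (simp add: P Q ncadd_lkp)
    then show "\<exists>P. \<phi> (ncadd p q) = lkp P \<and> Good n P" using Good_add[OF P(2) Q(2)] by blast
  qed
next
  fix c and p :: "'a ncpoly" assume p: "p \<in> GI n"
  show "ncscale c p \<in> GI n"
    unfolding GI_def
  proof (intro CollectI conjI allI impI)
    show "ncscale c p \<in> ncpolys" using p by (auto simp: GI_def intro: ncscale_ncpolys)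
    fix \<phi> :: "'a ncpoly \<Rightarrow> 'a ncpoly" assume e: "is_ncendo \<phi>"
    obtain P where P: "\<phi> p = lkp P" "Good n P" using p e by (auto simp: GI_def)
    have "\<phi> (ncscale c p) = ncscale c (\<phi> p)" using e p unfolding is_ncendo_def GI_def by blast
    then have "\<phi> (ncscale c p) = lkp (sc c P)" by (simp add: P ncscale_lkp)
    then show "\<exists>P. \<phi> (ncscale c p) = lkp P \<and> Good n P" using Good_sc[OF P(2)] by blast
  qed
next
  fix p a :: "'a ncpoly" assume p: "p \<in> GI n" and a: "a \<in> ncpolys"
    show "ncmult a p \<in> GI n"
      unfolding GI_def
    proof (intro CollectI conjI allI impI)
      show "ncmult a p \<in> ncpolys" using p a by (auto simp: GI_def intro: ncmult_ncpolys)
      fix \<phi> :: "'a ncpoly \<Rightarrow> 'a ncpoly" assume e: "is_ncendo \<phi>"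
      obtain P where P: "\<phi> p = lkp P" "Good n P" using p e by (auto simp: GI_def)
      obtain A where A: "\<phi> a = lkp A" "gs A" using endo_lkp[OF e a] by blast
      have "\<phi> (ncmult a p) = ncmult (\<phi> a) (\<phi> p)" using e p a unfolding is_ncendo_def GI_def by blast
      then have "\<phi> (ncmult a p) = lkp (A * P)" by (simp add: P A ncmult_lkp)
      then show "\<exists>P. \<phi> (ncmult a p) = lkp P \<and> Good n P" using Good_mult_left[OF assms A(2) P(2)] by blast
    qed
next
  fix p a :: "'a ncpoly" assume p: "p \<in> GI n" and a: "a \<in> ncpolys"
    show "ncmult p a \<in> GI n"
      unfolding GI_def
    proof (intro CollectI conjI allI impI)
      show "ncmult p a \<in> ncpolys" using p a by (auto simp: GI_def intro: ncmult_ncpolys)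
      fix \<phi> :: "'a ncpoly \<Rightarrow> 'a ncpoly" assume e: "is_ncendo \<phi>"
      obtain P where P: "\<phi> p = lkp P" "Good n P" using p e by (auto simp: GI_def)
      obtain A where A: "\<phi> a = lkp A" "gs A" using endo_lkp[OF e a] by blast
      have "\<phi> (ncmult p a) = ncmult (\<phi> p) (\<phi> a)" using e p a unfolding is_ncendo_def GI_def by blast
      then have "\<phi> (ncmult p a) = lkp (P * A)" by (simp add: P A ncmult_lkp)
      then show "\<exists>P. \<phi> (ncmult p a) = lkp P \<and> Good n P" using Good_mult_right[OF assms A(2) P(2)] by blast
    qed
qed

lemma ncvar_ncpolys: "ncvar 1 \<in> ncpolys"
  by (simp add: ncvar_def ncmon_lkp lkp_ncpolys gs_sng)

lemma GI_pow:
  assumes "1 \<le> n"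
  shows "ncpow (ncvar 1) n \<in> (GI n :: 'a::field_char_0 ncpoly set)"
proof -
  obtain k where n: "n = Suc k" using assms by (cases n) auto
  show ?thesis
    unfolding GI_def
  proof (intro CollectI conjI allI impI)
    show "ncpow (ncvar 1) n \<in> ncpolys" unfolding n by (rule ncpow_ncpolys[OF ncvar_ncpolys])
    fix \<phi> :: "'a ncpoly \<Rightarrow> 'a ncpoly" assume e: "is_ncendo \<phi>"
    obtain G where G: "\<phi> (ncvar 1) = lkp G" "gs G" using endo_lkp[OF e ncvar_ncpolys] by blast
    have "\<phi> (ncpow (ncvar 1) n) = lkp (G ^ n)"
      unfolding n endo_pow[OF e ncvar_ncpolys] G(1) ncpow_lkp ..
    then show "\<exists>P. \<phi> (ncpow (ncvar 1) n) = lkp P \<and> Good n P" using Good_pow[OF G(2)] by blast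
  qed
qed

lemma GI_closed:
  assumes "is_ncendo \<phi>"
  shows "\<phi> ` GI n \<subseteq> GI n"
proof
  fix q assume "q \<in> \<phi> ` GI n"
  then obtain p where p: "p \<in> GI n" "q = \<phi> p" by blast
  show "q \<in> GI n"
    unfolding GI_def
  proof (intro CollectI conjI allI impI)
    show "q \<in> ncpolys" using p assms unfolding GI_def is_ncendo_def by blast
    fix \<psi> :: "'a ncpoly \<Rightarrow> 'a ncpoly" assume e: "is_ncendo \<psi>"
    have "is_ncendo (\<psi> \<circ> \<phi>)" by (rule endo_comp[OF assms e])
    then show "\<exists>P. \<psi> q = lkp P \<and> Good n P" using p unfolding GI_def by auto
  qed
qed

lemma Tideal_sub_GI:
  assumes "1 \<le> n"
  shows "Tideal_pow n \<subseteq> (GI n :: 'a::field_char_0 ncpoly set)"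
  unfolding Tideal_pow_def
  by (rule Inter_lower) (use GI_ideal[OF assms] GI_pow[OF assms] GI_closed in blast)

lemma ncspan_0: "(\<lambda>w. 0) \<in> ncspan G"
  unfolding ncspan_def by (rule CollectI, rule exI[of _ "{}"]) auto

lemma ncspan_gen: "g \<in> G \<Longrightarrow> g \<in> ncspan G"
  unfolding ncspan_def by (rule CollectI, rule exI[of _ "{g}"], rule exI[of _ "\<lambda>_. 1"]) auto

lemma ncspan_add:
  assumes "p \<in> ncspan G" "q \<in> ncspan G"
  shows "(\<lambda>w. p w + q w) \<in> ncspan G"
proof -
  obtain S1 c1 where 1: "finite S1" "S1 \<subseteq> G" "p = (\<lambda>w. \<Sum>g\<in>S1. c1 g * g w)"
    using assms(1) unfolding ncspan_def by blast
  obtain S2 c2 where 2: "finite S2" "S2 \<subseteq> G" "q = (\<lambda>w. \<Sum>g\<in>S2. c2 g * g w)"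
    using assms(2) unfolding ncspan_def by blast
  define c where "c g = (if g \<in> S1 then c1 g else 0) + (if g \<in> S2 then c2 g else 0)" for g
  have "(\<lambda>w. p w + q w) = (\<lambda>w. \<Sum>g\<in>S1 \<union> S2. c g * g w)"
  proof
    fix w
    have "(\<Sum>g\<in>S1 \<union> S2. c g * g w) = (\<Sum>g\<in>S1 \<union> S2. if g \<in> S1 then c1 g * g w else 0) + (\<Sum>g\<in>S1 \<union> S2. if g \<in> S2 then c2 g * g w else 0)"
      unfolding sum.distrib[symmetric] by (rule sum.cong) (auto simp: c_def distrib_right)
    also have "\<dots> = (\<Sum>g\<in>S1. c1 g * g w) + (\<Sum>g\<in>S2. c2 g * g w)"
      using 1(1) 2(1) by (simp add: sum.inter_restrict[symmetric] Int_absorb1 Int_absorb2 Int_commute)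
    finally show "p w + q w = (\<Sum>g\<in>S1 \<union> S2. c g * g w)" using 1(3) 2(3) by simp
  qed
  then show ?thesis unfolding ncspan_def using 1 2 by blast
qed

lemma ncspan_scale:
  assumes "p \<in> ncspan G"
  shows "(\<lambda>w. c * p w) \<in> ncspan G"
proof -
  obtain S1 c1 where 1: "finite S1" "S1 \<subseteq> G" "p = (\<lambda>w. \<Sum>g\<in>S1. c1 g * g w)"
    using assms(1) unfolding ncspan_def by blast
  have eq: "(\<lambda>w. c * p w) = (\<lambda>w. \<Sum>g\<in>S1. (c * c1 g) * g w)"
    by (simp add: 1(3) sum_distrib_left mult.assoc)
  show ?thesis unfolding ncspan_def
    by (rule CollectI, rule exI[of _ S1], rule exI[of _ "\<lambda>g. c * c1 g"]) (simp add: 1(1,2) eq)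
qed

lemma lkp_bl: "lkp (bl W) = P_O W"
  by (auto simp: bl_def P_O_def perms_def fun_eq_iff lookup_sum lookup_single when_def ncmon_def intro!: sum.cong)

lemma Part_Omega: "Part n {1..m} = Omega n m"
  by (simp add: Part_def Omega_def)

lemma TT_ncspan:
  assumes "X \<in> TT n {1..m}"
  shows "lkp X \<in> ncspan (P_O ` Omega n m)"
proof -
  have "X \<in> spn (bl ` Part n {1..m})" using assms by (simp add: TT_def)
  then show ?thesis
  proof induction
    case spn_0 then show ?case using ncspan_0 by (simp add: fun_eq_iff)
  next
    case (spn_gen x)
    then obtain W where W: "x = bl W" "W \<in> Part n {1..m}" by blast
    then have "W \<in> Omega n m" using Part_Omega by blast
    then have "P_O W \<in> ncspan (P_O ` Omega n m)" by (intro ncspan_gen imageI)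
    then show ?case using W(1) by (simp add: lkp_bl)
  next
    case (spn_add x y)
    then show ?case using ncspan_add[OF spn_add.IH] by (simp add: lookup_add fun_eq_iff)
  next
    case (spn_sc x c)
    then show ?case using ncspan_scale[OF spn_sc.IH, of c] by (simp add: fun_eq_iff)
  qed
qed

theorem sub1:
  assumes "1 \<le> n"
  shows "(Wnm n m :: ('a::field_char_0) ncpoly set) \<subseteq> ncspan (P_O ` Omega n m)"
proof
  fix p :: "'a ncpoly" assume "p \<in> Wnm n m"
  then have pV: "p \<in> Vmult m" and pT: "p \<in> Tideal_pow n" by (auto simp: Wnm_def)
  have "p \<in> GI n" using Tideal_sub_GI[OF assms] pT by blast
  then obtain P where P: "p = lkp P" "Good n P" using endo_id by (force simp: GI_def)
  have "pr {1..m} P = P"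
  proof (rule poly_mapping_eqI)
    fix v show "lkp (pr {1..m} P) v = lkp P v"
      using pV P(1) by (auto simp: lookup_pr Vmult_def)
  qed
  then have "P \<in> TT n {1..m}" using P(2) by (metis Good_def finite_atLeastAtMost)
  then show "p \<in> ncspan (P_O ` Omega n m)" using TT_ncspan P(1) by blast
qed



section \<open>Substitution endomorphisms\<close>

definition Mo :: "(nat \<Rightarrow> 'a::field R) \<Rightarrow> nat list \<Rightarrow> 'a R" where
  "Mo \<sigma> v = prod_list (map \<sigma> v)"

definition subst :: "(nat \<Rightarrow> 'a::field R) \<Rightarrow> 'a R \<Rightarrow> 'a R" where
  "subst \<sigma> P = (\<Sum>v\<in>kys P. sc (lkp P v) (Mo \<sigma> v))"

lemma subst_superset:
  assumes "finite K" "kys P \<subseteq> K"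
  shows "subst \<sigma> P = (\<Sum>v\<in>K. sc (lkp P v) (Mo \<sigma> v))"
  unfolding subst_def
  by (rule sum.mono_neutral_left[OF assms]) (auto simp: in_keys_iff)

lemma subst_0 [simp]: "subst \<sigma> 0 = 0"
  by (simp add: subst_def)

lemma subst_add: "subst \<sigma> (P + Q) = subst \<sigma> P + subst \<sigma> Q"
proof -
  let ?K = "kys P \<union> kys Q"
  have "subst \<sigma> (P + Q) = (\<Sum>v\<in>?K. sc (lkp (P + Q) v) (Mo \<sigma> v))"
    by (rule subst_superset) (auto simp: keys_add)
  also have "\<dots> = (\<Sum>v\<in>?K. sc (lkp P v) (Mo \<sigma> v)) + (\<Sum>v\<in>?K. sc (lkp Q v) (Mo \<sigma> v))"
    by (simp add: lookup_add sc_add2 sum.distrib)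
  also have "\<dots> = subst \<sigma> P + subst \<sigma> Q"
    by (simp add: subst_superset[symmetric])
  finally show ?thesis .
qed

lemma subst_sc: "subst \<sigma> (sc c P) = sc c (subst \<sigma> P)"
proof -
  have "subst \<sigma> (sc c P) = (\<Sum>v\<in>kys P. sc (lkp (sc c P) v) (Mo \<sigma> v))"
    by (rule subst_superset) (auto simp: in_keys_iff)
  also have "\<dots> = sc c (subst \<sigma> P)"
    by (simp add: subst_def sc_sum)
  finally show ?thesis .
qed

lemma subst_sng: "subst \<sigma> (sng v c) = sc c (Mo \<sigma> v)"
proof -
  have "subst \<sigma> (sng v c) = (\<Sum>w\<in>{v}. sc (lkp (sng v c) w) (Mo \<sigma> w))"
    by (rule subst_superset) auto
  then show ?thesis by simp
qed

lemma subst_sum: "subst \<sigma> (sum f I) = (\<Sum>i\<in>I. subst \<sigma> (f i))"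
  by (induction I rule: infinite_finite_induct) (simp_all add: subst_add)

lemma Mo_append: "Mo \<sigma> (u @ v) = Mo \<sigma> u * Mo \<sigma> v"
  by (simp add: Mo_def)

lemma sc_mult_sc: "sc a X * sc b Y = sc (a * b) (X * Y)"
  by (simp add: sc_mult_left sc_mult_right mult.commute)

lemma poly_expand2: "(P::'a::field R) = (\<Sum>v\<in>kys P. sng v (lkp P v))"
  using poly_expand[of P] by (simp add: sc_sng)

lemma subst_mult: "subst \<sigma> (P * Q) = subst \<sigma> P * subst \<sigma> Q"
proof -
  have "P * Q = (\<Sum>v\<in>kys P. sng v (lkp P v)) * (\<Sum>v'\<in>kys Q. sng v' (lkp Q v'))"
    using poly_expand2[of P] poly_expand2[of Q] by simp
  also have "\<dots> = (\<Sum>v\<in>kys P. \<Sum>v'\<in>kys Q. sng (v @ v') (lkp P v * lkp Q v'))"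
    by (simp add: sum_product mult_sng_sng)
  finally have "subst \<sigma> (P * Q) = (\<Sum>v\<in>kys P. \<Sum>v'\<in>kys Q. sc (lkp P v * lkp Q v') (Mo \<sigma> v * Mo \<sigma> v'))"
    by (simp add: subst_sum subst_sng Mo_append)
  also have "\<dots> = (\<Sum>v\<in>kys P. \<Sum>v'\<in>kys Q. sc (lkp P v) (Mo \<sigma> v) * sc (lkp Q v') (Mo \<sigma> v'))"
    by (simp add: sc_mult_sc)
  also have "\<dots> = subst \<sigma> P * subst \<sigma> Q"
    by (simp add: subst_def sum_product)
  finally show ?thesis .
qed

lemma gs_Mo: "(\<And>i. gs (\<sigma> i)) \<Longrightarrow> v \<noteq> [] \<Longrightarrow> gs (Mo \<sigma> v)"
proof (induction v)
  case Nil then show ?case by simp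
next
  case (Cons a v)
  show ?case
  proof (cases "v = []")
    case True then show ?thesis using Cons.prems by (simp add: Mo_def)
  next
    case False
    then have "gs (Mo \<sigma> v)" using Cons by blast
    then show ?thesis using Cons.prems(1)[of a] by (simp add: Mo_def gs_mult)
  qed
qed

lemma gs_subst:
  assumes "\<And>i. gs (\<sigma> i)" "gs P"
  shows "gs (subst \<sigma> P)"
  unfolding subst_def
proof (rule gs_sum)
  fix v assume "v \<in> kys P"
  then have "v \<noteq> []" using assms(2) by (auto simp: gs_def)
  then show "gs (sc (lkp P v) (Mo \<sigma> v))" by (intro gs_sc gs_Mo assms(1))
qed

definition phi :: "(nat \<Rightarrow> 'a::field R) \<Rightarrow> 'a ncpoly \<Rightarrow> 'a ncpoly" where
  "phi \<sigma> p = lkp (subst \<sigma> (Abs_poly_mapping p))"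

lemma phi_lkp [simp]: "phi \<sigma> (lkp P) = lkp (subst \<sigma> P)"
  by (simp add: phi_def)

lemma phi_endo:
  assumes "\<And>i. gs (\<sigma> i)"
  shows "is_ncendo (phi \<sigma>)"
  unfolding is_ncendo_def
proof (intro conjI ballI allI)
  show "phi \<sigma> ` ncpolys \<subseteq> ncpolys"
  proof
    fix q assume "q \<in> phi \<sigma> ` ncpolys"
    then obtain P where "gs P" "q = phi \<sigma> (lkp P)" using ncpolys_ex by blast
    then show "q \<in> ncpolys" using gs_subst[OF assms] by (simp add: lkp_ncpolys)
  qed
next
  fix p q :: "'a ncpoly" assume "p \<in> ncpolys" "q \<in> ncpolys"
  then obtain P Q where "p = lkp P" "q = lkp Q" using ncpolys_ex by blast
  then show "phi \<sigma> (ncadd p q) = ncadd (phi \<sigma> p) (phi \<sigma> q)"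
    by (simp add: ncadd_lkp subst_add)
next
  fix c and p :: "'a ncpoly" assume "p \<in> ncpolys"
  then obtain P where "p = lkp P" using ncpolys_ex by blast
  then show "phi \<sigma> (ncscale c p) = ncscale c (phi \<sigma> p)"
    by (simp add: ncscale_lkp subst_sc)
next
  fix p q :: "'a ncpoly" assume "p \<in> ncpolys" "q \<in> ncpolys"
  then obtain P Q where "p = lkp P" "q = lkp Q" using ncpolys_ex by blast
  then show "phi \<sigma> (ncmult p q) = ncmult (phi \<sigma> p) (phi \<sigma> q)"
    by (simp add: ncmult_lkp subst_mult)
qed

lemma phi_pow:
  assumes "\<And>i. gs (\<sigma> i)" "1 \<le> n"
  shows "phi \<sigma> (ncpow (ncvar 1) n) = lkp ((\<sigma> 1) ^ n)"
proof -
  obtain k where n: "n = Suc k" using assms(2) by (cases n) auto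
  have "phi \<sigma> (ncvar 1) = lkp (\<sigma> 1)"
    by (simp add: ncvar_def ncmon_lkp subst_sng Mo_def)
  then show ?thesis
    unfolding n endo_pow[OF phi_endo[OF assms(1)] ncvar_ncpolys] by (simp add: ncpow_lkp)
qed

section \<open>Inclusion-exclusion\<close>

definition lsts :: "nat \<Rightarrow> 'b set \<Rightarrow> 'b list set" where
  "lsts k S = {L. set L \<subseteq> S \<and> length L = k}"

lemma finite_lsts: "finite S \<Longrightarrow> finite (lsts k S)"
  by (simp add: lsts_def finite_lists_length_eq)

lemma lsts_Suc: "lsts (Suc k) S = (\<lambda>(A, L). A # L) ` (S \<times> lsts k S)"
proof
  show "lsts (Suc k) S \<subseteq> (\<lambda>(A, L). A # L) ` (S \<times> lsts k S)"
  proof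
    fix L assume "L \<in> lsts (Suc k) S"
    then obtain A L' where "L = A # L'" "A \<in> S" "L' \<in> lsts k S"
      by (cases L) (auto simp: lsts_def)
    then show "L \<in> (\<lambda>(A, L). A # L) ` (S \<times> lsts k S)" by force
  qed
next
  show "(\<lambda>(A, L). A # L) ` (S \<times> lsts k S) \<subseteq> lsts (Suc k) S"
    by (auto simp: lsts_def)
qed

lemma pow_sum_expand:
  fixes f :: "'b \<Rightarrow> 'c::semiring_1"
  assumes "finite S"
  shows "(\<Sum>A\<in>S. f A) ^ k = (\<Sum>L\<in>lsts k S. prod_list (map f L))"
proof (induction k)
  case 0
  have "lsts 0 S = {[]}" by (auto simp: lsts_def)
  then show ?case by simp
next
  case (Suc k)
  have inj: "inj_on (\<lambda>(A, L). A # L) (S \<times> lsts k S)" by (auto simp: inj_on_def)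
  have "(\<Sum>A\<in>S. f A) ^ Suc k = (\<Sum>A\<in>S. f A) * (\<Sum>L\<in>lsts k S. prod_list (map f L))"
    by (simp add: Suc.IH)
  also have "\<dots> = (\<Sum>A\<in>S. \<Sum>L\<in>lsts k S. prod_list (map f (A # L)))"
    by (simp add: sum_product)
  also have "\<dots> = (\<Sum>p\<in>S \<times> lsts k S. prod_list (map f ((\<lambda>(A, L). A # L) p)))"
    by (simp add: sum.cartesian_product case_prod_beta)
  also have "\<dots> = (\<Sum>L\<in>lsts (Suc k) S. prod_list (map f L))"
    unfolding lsts_Suc by (simp add: sum.reindex[OF inj] comp_def)
  finally show ?case .
qed

lemma prod_sng: "prod_list (map (\<lambda>A. sng A (1::'a::field)) (L::nat list list)) = sng (concat L) 1"
  by (induction L) (simp_all add: mult_sng_sng)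

lemma alt_sum: "finite X \<Longrightarrow> (\<Sum>T\<in>Pow X. (-1::'a::field) ^ card T) = (if X = {} then 1 else 0)"
proof (induction X rule: finite_induct)
  case empty then show ?case by simp
next
  case (insert x X)
  have inj: "inj_on (insert x) (Pow X)" using insert(2) by (auto simp: inj_on_def)
  have disj: "Pow X \<inter> insert x ` Pow X = {}" using insert(2) by auto
  have fin: "finite (Pow X)" using insert(1) by simp
  have "(\<Sum>T\<in>Pow (insert x X). (-1::'a) ^ card T) = (\<Sum>T\<in>Pow X. (-1::'a) ^ card T) + (\<Sum>T\<in>insert x ` Pow X. (-1::'a) ^ card T)"
    unfolding Pow_insert by (rule sum.union_disjoint) (use fin disj in auto)
  also have "(\<Sum>T\<in>insert x ` Pow X. (-1::'a) ^ card T) = (\<Sum>T\<in>Pow X. (-1::'a) ^ card (insert x T))"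
    by (simp add: sum.reindex[OF inj] comp_def)
  also have "\<dots> = (\<Sum>T\<in>Pow X. - ((-1::'a) ^ card T))"
  proof (rule sum.cong)
    fix T assume "T \<in> Pow X"
    then have "x \<notin> T" "finite T" using insert(1,2) finite_subset by auto
    then show "(-1::'a) ^ card (insert x T) = - ((-1) ^ card T)" by simp
  qed simp
  finally show ?case by (simp add: sum_negf)
qed

lemma incl_excl:
  assumes "finite Op" "T \<subseteq> Op"
  shows "(\<Sum>S\<in>{S\<in>Pow Op. T \<subseteq> S}. (-1::'a::field) ^ (card Op - card S)) = (if T = Op then 1 else 0)"
proof -
  have "(\<Sum>S\<in>{S\<in>Pow Op. T \<subseteq> S}. (-1::'a) ^ (card Op - card S)) = (\<Sum>R\<in>Pow (Op - T). (-1::'a) ^ card R)"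
  proof (rule sum.reindex_bij_witness[where i="\<lambda>R. Op - R" and j="\<lambda>S. Op - S"])
    fix S assume "S \<in> {S\<in>Pow Op. T \<subseteq> S}"
    then show "Op - (Op - S) = S" "Op - S \<in> Pow (Op - T)" by auto
  next
    fix R assume "R \<in> Pow (Op - T)"
    then show "Op - (Op - R) = R" "Op - R \<in> {S\<in>Pow Op. T \<subseteq> S}" using assms(2) by auto
  next
    fix S assume "S \<in> {S\<in>Pow Op. T \<subseteq> S}"
    then have "S \<subseteq> Op" by auto
    then have "card (Op - S) = card Op - card S" using assms(1) finite_subset by (metis card_Diff_subset)
    then show "(-1::'a) ^ card (Op - S) = (-1) ^ (card Op - card S)" by simp
  qed
  also have "\<dots> = (if T = Op then 1 else 0)"
    using alt_sum[of "Op - T", where 'a='a] assms by (auto simp: Diff_eq_empty_iff)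
  finally show ?thesis .
qed

lemma sc_sum_left: "sc (sum f A) X = (\<Sum>a\<in>A. sc (f a) X)"
  by (rule poly_mapping_eqI) (simp add: lookup_sum sum_distrib_right)

lemma bl_incl_excl:
  assumes "finite Op" "card Op = n"
  shows "(bl Op :: 'a::field R) = (\<Sum>S\<in>Pow Op. sc ((-1) ^ (card Op - card S)) ((yW S) ^ n))"
proof -
  let ?c = "\<lambda>S. (-1::'a) ^ (card Op - card S)"
  let ?m = "\<lambda>L. sng (concat L) (1::'a)"
  have "(\<Sum>S\<in>Pow Op. sc (?c S) ((yW S) ^ n)) = (\<Sum>S\<in>Pow Op. \<Sum>L\<in>lsts n S. sc (?c S) (?m L))"
  proof (rule sum.cong)
    fix S assume "S \<in> Pow Op"
    then have "finite S" using assms(1) finite_subset by auto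
    then show "sc (?c S) ((yW S) ^ n) = (\<Sum>L\<in>lsts n S. sc (?c S) (?m L))"
      by (simp add: yW_def pow_sum_expand prod_sng sc_sum)
  qed simp
  also have "\<dots> = (\<Sum>S\<in>Pow Op. \<Sum>L\<in>lsts n Op. if set L \<subseteq> S then sc (?c S) (?m L) else 0)"
  proof (rule sum.cong)
    fix S assume S: "S \<in> Pow Op"
    have "lsts n S = {L\<in>lsts n Op. set L \<subseteq> S}" using S by (auto simp: lsts_def)
    then show "(\<Sum>L\<in>lsts n S. sc (?c S) (?m L)) = (\<Sum>L\<in>lsts n Op. if set L \<subseteq> S then sc (?c S) (?m L) else 0)"
      by (simp add: sum.inter_filter finite_lsts assms(1))
  qed simp
  also have "\<dots> = (\<Sum>L\<in>lsts n Op. \<Sum>S\<in>Pow Op. if set L \<subseteq> S then sc (?c S) (?m L) else 0)"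
    by (rule sum.swap)
  also have "\<dots> = (\<Sum>L\<in>lsts n Op. if set L = Op then ?m L else 0)"
  proof (rule sum.cong)
    fix L assume L: "L \<in> lsts n Op"
    have "(\<Sum>S\<in>Pow Op. if set L \<subseteq> S then sc (?c S) (?m L) else 0) = (\<Sum>S\<in>{S\<in>Pow Op. set L \<subseteq> S}. sc (?c S) (?m L))"
      by (rule sum.inter_filter[symmetric]) (simp add: assms(1))
    also have "\<dots> = sc (\<Sum>S\<in>{S\<in>Pow Op. set L \<subseteq> S}. ?c S) (?m L)"
      by (simp add: sc_sum_left)
    also have "\<dots> = (if set L = Op then ?m L else 0)"
    proof -
      have sL: "set L \<subseteq> Op" using L by (simp add: lsts_def)
      show ?thesis by (simp only: incl_excl[OF assms(1) sL]) simp
    qed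
    finally show "(\<Sum>S\<in>Pow Op. if set L \<subseteq> S then sc (?c S) (?m L) else 0) = (if set L = Op then ?m L else 0)" .
  qed simp
  also have "\<dots> = (\<Sum>L\<in>{L\<in>lsts n Op. set L = Op}. ?m L)"
    by (simp add: sum.inter_filter finite_lsts assms(1))
  also have "{L\<in>lsts n Op. set L = Op} = perms Op"
  proof
    show "{L\<in>lsts n Op. set L = Op} \<subseteq> perms Op"
    proof
      fix L assume "L \<in> {L\<in>lsts n Op. set L = Op}"
      then have "set L = Op" "length L = card (set L)" using assms(2) by (auto simp: lsts_def)
      then show "L \<in> perms Op" by (simp add: perms_def card_distinct)
    qed
    show "perms Op \<subseteq> {L\<in>lsts n Op. set L = Op}"
      using assms(2) by (auto simp: perms_def lsts_def distinct_card)
  qed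
  finally show ?thesis by (simp add: bl_def)
qed

lemma ideal_lincomb:
  assumes "is_ncideal I" "finite T" "\<And>t. t \<in> T \<Longrightarrow> f t \<in> I"
  shows "(\<lambda>w. \<Sum>t\<in>T. c t * f t w) \<in> I"
  using assms(2,3)
proof (induction T rule: finite_induct)
  case empty
  have "(\<lambda>w. \<Sum>t\<in>{}. c t * f t w) = nczero" by (simp add: nczero_def)
  then show ?case using assms(1) by (simp add: is_ncideal_def)
next
  case (insert t T)
  have eq: "(\<lambda>w. \<Sum>t\<in>insert t T. c t * f t w) = ncadd (ncscale (c t) (f t)) (\<lambda>w. \<Sum>t\<in>T. c t * f t w)"
    using insert(1,2) by (simp add: ncadd_def ncscale_def fun_eq_iff)
  have s1: "ncscale (c t) (f t) \<in> I" using assms(1) insert(4) unfolding is_ncideal_def by blast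
  have s2: "(\<lambda>w. \<Sum>t\<in>T. c t * f t w) \<in> I" using insert by blast
  have add: "\<forall>p\<in>I. \<forall>q\<in>I. ncadd p q \<in> I" using assms(1) unfolding is_ncideal_def by blast
  show ?case unfolding eq using add s1 s2 by blast
qed

lemma yW_gs:
  assumes "Op \<in> Omega n m" "S \<subseteq> Op"
  shows "gs (yW S :: 'a::field R)"
proof -
  have "finite Op" using assms(1) by (simp add: Omega_def)
  then have fS: "finite S" using assms(2) finite_subset by blast
  show ?thesis unfolding gs_def
  proof
    fix v assume "v \<in> kys (yW S :: 'a R)"
    then have v: "v \<in> Op" using assms(2) by (auto simp: lookup_yW[OF fS] in_keys_iff split: if_splits)
    have U: "(\<Union>A\<in>Op. set A) = {1..m}" and ne: "v \<noteq> []" using assms(1) v by (auto simp: Omega_def)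
    have "set v \<subseteq> {1..m}" using U v by blast
    then show "v \<noteq> [] \<and> 0 \<notin> set v" using ne by auto
  qed
qed

lemma P_O_Tideal:
  assumes "1 \<le> n" "Op \<in> Omega n m"
  shows "(P_O Op :: 'a::field ncpoly) \<in> Tideal_pow n"
  unfolding Tideal_pow_def
proof (rule InterI)
  fix I :: "'a ncpoly set"
  assume "I \<in> {I. is_ncideal I \<and> ncpow (ncvar 1) n \<in> I \<and> (\<forall>\<phi>. is_ncendo \<phi> \<longrightarrow> \<phi> ` I \<subseteq> I)}"
  then have I: "is_ncideal I" "ncpow (ncvar 1) n \<in> I" "\<And>\<phi>. is_ncendo \<phi> \<Longrightarrow> \<phi> ` I \<subseteq> I" by auto
  have fO: "finite Op" and cO: "card Op = n" using assms(2) by (auto simp: Omega_def)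
  have mem: "lkp ((yW S :: 'a R) ^ n) \<in> I" if "S \<in> Pow Op" for S
  proof -
    have g: "gs (yW S :: 'a R)" using yW_gs[OF assms(2)] that by auto
    have e: "is_ncendo (phi (\<lambda>_. yW S :: 'a R))" by (rule phi_endo) (use g in simp)
    have "phi (\<lambda>_. yW S) (ncpow (ncvar 1) n) \<in> I" using I(3)[OF e] I(2) by blast
    then show ?thesis using phi_pow[of "\<lambda>_. yW S :: 'a R" n] g assms(1) by simp
  qed
  have "P_O Op = lkp (bl Op :: 'a R)" by (simp add: lkp_bl)
  also have "\<dots> = (\<lambda>w. \<Sum>S\<in>Pow Op. (-1) ^ (card Op - card S) * lkp ((yW S :: 'a R) ^ n) w)"
    by (simp add: bl_incl_excl[OF fO cO] lookup_sum fun_eq_iff)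
  also have "\<dots> \<in> I"
    by (rule ideal_lincomb[OF I(1)]) (use fO mem in auto)
  finally show "P_O Op \<in> I" .
qed

lemma P_O_Vmult:
  assumes "1 \<le> m" "Op \<in> Omega n m"
  shows "(P_O Op :: 'a::field ncpoly) \<in> Vmult m"
proof -
  have Op: "finite Op" "\<forall>A\<in>Op. A \<noteq> [] \<and> distinct A" "\<forall>A\<in>Op. \<forall>B\<in>Op. A \<noteq> B \<longrightarrow> set A \<inter> set B = {}"
    "(\<Union>A\<in>Op. set A) = {1..m}" using assms(2) by (auto simp: Omega_def)
  have key: "v \<noteq> [] \<and> 0 \<notin> set v \<and> distinct v \<and> set v = {1..m}" if "v \<in> kys (bl Op :: 'a R)" for v
  proof -
    have "v \<in> kys (\<Sum>L\<in>perms Op. sng (concat L) (1::'a))" using that by (simp add: bl_def)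
    then have "v \<in> (\<Union>L\<in>perms Op. kys (sng (concat L) (1::'a)))" by (rule subsetD[OF keys_sum])
    then obtain L where L: "L \<in> perms Op" "v = concat L" by auto
    have Ld: "distinct L" "set L = Op" using L(1) by (auto simp: perms_def)
    have sv: "set v = {1..m}" using L(2) Ld(2) Op(4) by simp
    have "distinct v" unfolding L(2)
      by (rule distinct_concat) (use Ld Op(2,3) in auto)
    moreover have "v \<noteq> []" using sv assms(1) by auto
    ultimately show ?thesis using sv by auto
  qed
  have "lkp (bl Op :: 'a R) \<in> ncpolys" unfolding lkp_ncpolys gs_def using key by blast
  then show ?thesis unfolding Vmult_def lkp_bl[symmetric] using key by (auto simp: in_keys_iff)
qed

lemma Vmult_lincomb:
  assumes "finite S" "S \<subseteq> Vmult m"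
  shows "(\<lambda>w. \<Sum>g\<in>S. c g * g w) \<in> Vmult m"
proof -
  let ?p = "\<lambda>w. \<Sum>g\<in>S. c g * g w"
  have nz: "\<exists>g\<in>S. g w \<noteq> 0" if "?p w \<noteq> 0" for w
    using sum.not_neutral_contains_not_neutral[OF that] by auto
  have "{w. ?p w \<noteq> 0} \<subseteq> (\<Union>g\<in>S. {w. g w \<noteq> 0})" using nz by blast
  moreover have "finite (\<Union>g\<in>S. {w. g w \<noteq> 0})"
    using assms by (auto simp: Vmult_def ncpolys_def)
  ultimately have fin: "finite {w. ?p w \<noteq> 0}" by (rule finite_subset)
  show ?thesis unfolding Vmult_def ncpolys_def
    using fin nz assms(2) by (fastforce simp: Vmult_def ncpolys_def)
qed

theorem sub2:
  assumes "1 \<le> n" "n \<le> m"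
  shows "ncspan (P_O ` Omega n m) \<subseteq> (Wnm n m :: ('a::field) ncpoly set)"
proof
  fix p :: "'a ncpoly" assume "p \<in> ncspan (P_O ` Omega n m)"
  then obtain S c where S: "finite S" "S \<subseteq> P_O ` Omega n m" "p = (\<lambda>w. \<Sum>g\<in>S. c g * g w)"
    unfolding ncspan_def by blast
  have "p \<in> Vmult m"
  proof -
    have "S \<subseteq> Vmult m"
    proof
      fix g assume "g \<in> S"
      then obtain Op where "Op \<in> Omega n m" "g = P_O Op" using S(2) by blast
      then show "g \<in> Vmult m" using P_O_Vmult[of m Op n] assms by simp
    qed
    then show ?thesis unfolding S(3) by (rule Vmult_lincomb[OF S(1)])
  qed
  moreover have "p \<in> Tideal_pow n"
    unfolding Tideal_pow_def
  proof (rule InterI)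
    fix I :: "'a ncpoly set"
    assume I: "I \<in> {I. is_ncideal I \<and> ncpow (ncvar 1) n \<in> I \<and> (\<forall>\<phi>. is_ncendo \<phi> \<longrightarrow> \<phi> ` I \<subseteq> I)}"
    have "g \<in> I" if gS: "g \<in> S" for g
    proof -
      obtain Op where "Op \<in> Omega n m" "g = P_O Op" using S(2) gS by blast
      then show ?thesis using P_O_Tideal[OF assms(1)] I unfolding Tideal_pow_def by blast
    qed
    then show "p \<in> I" unfolding S(3) using ideal_lincomb[of I S "\<lambda>g. g" c] I S(1) by simp
  qed
  ultimately show "p \<in> Wnm n m" by (simp add: Wnm_def)
qed

theorem corollary4p5:
  fixes n m :: nat
  assumes "1 \<le> n" and "n \<le> m"
  shows "(Wnm n m :: ('a::field_char_0) ncpoly set) = ncspan (P_O ` Omega n m)"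
  using sub1[OF assms(1)] sub2[OF assms] by blast


end
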